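(* Let $\mathcal{M}$ be a model category and $X,Y$ objects of $\mathcal{M}$. The inclusion of the full subcategory $(\mathrm{WCofib})^{-1}\mathcal{M}(\mathrm{WFib})^{-1}(X,Y)$ into $\mathcal{M}(X,Y)_{\mathrm{Hom}}$ is a homotopy equivalence of categories.
   Context: $\mathcal{M}(X,Y)_{\mathrm{Hom}}$ is the category whose objects are zig-zags $X \xleftarrow{\sim} U \to V \xleftarrow{\sim} Y$ in $\mathcal{M}$ (arrows marked $\sim$ are weak equivalences), a morphism $[X\leftarrow U\to V\leftarrow Y]\to[X\leftarrow U'\to V'\leftarrow Y]$ being a pair of weak equivalences $U\to U'$, $V\to V'$ making the evident diagram (identities on $X$, $Y$) commute. $(\mathrm{WCofib})^{-1}\mathcal{M}(\mathrm{WFib})^{-1}(X,Y)$ is the full subcategory on those zig-zags in which $U\to X$ is a trivial fibration and $Y\to V$ is a trivial cofibration. A functor $F\colon\mathcal{C}\to\mathcal{D}$ is a homotopy equivalence if there is a functor $G\colon\mathcal{D}\to\mathcal{C}$ together with zig-zags of natural transformations connecting $F\circ G$ with $\mathrm{id}_{\mathcal{D}}$ and $G\circ F$ with $\mathrm{id}_{\mathcal{C}}$. *)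

theory Defs
  imports Main
begin

record ('o, 'a) cat =
  Ob  :: "'o set"
  Ar  :: "'a set"
  Dom :: "'a \<Rightarrow> 'o"
  Cod :: "'a \<Rightarrow> 'o"
  Idt :: "'o \<Rightarrow> 'a"
  Cmp :: "'a \<Rightarrow> 'a \<Rightarrow> 'a"   (* Cmp C g f = g o f *)

definition hom :: "('o, 'a) cat \<Rightarrow> 'o \<Rightarrow> 'o \<Rightarrow> 'a set" where
  "hom C x y = {f \<in> Ar C. Dom C f = x \<and> Cod C f = y}"

definition category :: "('o, 'a) cat \<Rightarrow> bool" where
  "category C \<longleftrightarrow>
     (\<forall>f\<in>Ar C. Dom C f \<in> Ob C \<and> Cod C f \<in> Ob C) \<and>
     (\<forall>x\<in>Ob C. Idt C x \<in> hom C x x) \<and>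
     (\<forall>f\<in>Ar C. \<forall>g\<in>Ar C. Cod C f = Dom C g \<longrightarrow> Cmp C g f \<in> hom C (Dom C f) (Cod C g)) \<and>
     (\<forall>f\<in>Ar C. Cmp C (Idt C (Cod C f)) f = f \<and> Cmp C f (Idt C (Dom C f)) = f) \<and>
     (\<forall>f\<in>Ar C. \<forall>g\<in>Ar C. \<forall>h\<in>Ar C. Cod C f = Dom C g \<longrightarrow> Cod C g = Dom C h \<longrightarrow>
         Cmp C h (Cmp C g f) = Cmp C (Cmp C h g) f)"

definition op_cat :: "('o, 'a) cat \<Rightarrow> ('o, 'a) cat" where
  "op_cat C = C\<lparr>Dom := Cod C, Cod := Dom C, Cmp := (\<lambda>g f. Cmp C f g)\<rparr>"

definition terminal :: "('o, 'a) cat \<Rightarrow> 'o \<Rightarrow> bool" where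
  "terminal C t \<longleftrightarrow> t \<in> Ob C \<and> (\<forall>x\<in>Ob C. \<exists>!f. f \<in> hom C x t)"

definition has_pullbacks :: "('o, 'a) cat \<Rightarrow> bool" where
  "has_pullbacks C \<longleftrightarrow>
     (\<forall>f\<in>Ar C. \<forall>g\<in>Ar C. Cod C f = Cod C g \<longrightarrow>
        (\<exists>p q. p \<in> Ar C \<and> q \<in> Ar C \<and> Dom C p = Dom C q \<and> Cod C p = Dom C f \<and>
               Cod C q = Dom C g \<and> Cmp C f p = Cmp C g q \<and>
               (\<forall>a\<in>Ar C. \<forall>b\<in>Ar C. Dom C a = Dom C b \<and> Cod C a = Dom C f \<and>
                   Cod C b = Dom C g \<and> Cmp C f a = Cmp C g b \<longrightarrow>
                   (\<exists>!h. h \<in> hom C (Dom C a) (Dom C p) \<and> Cmp C p h = a \<and> Cmp C q h = b))))"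

text \<open>Finite completeness = terminal object + pullbacks; finite cocompleteness dually.\<close>
definition finitely_bicomplete :: "('o, 'a) cat \<Rightarrow> bool" where
  "finitely_bicomplete C \<longleftrightarrow>
     (\<exists>t. terminal C t) \<and> has_pullbacks C \<and>
     (\<exists>i. terminal (op_cat C) i) \<and> has_pullbacks (op_cat C)"

definition wide_subcategory :: "('o, 'a) cat \<Rightarrow> 'a set \<Rightarrow> bool" where
  "wide_subcategory C S \<longleftrightarrow> S \<subseteq> Ar C \<and> (\<forall>x\<in>Ob C. Idt C x \<in> S) \<and>
     (\<forall>f\<in>S. \<forall>g\<in>S. Cod C f = Dom C g \<longrightarrow> Cmp C g f \<in> S)"

definition two_out_of_three :: "('o, 'a) cat \<Rightarrow> 'a set \<Rightarrow> bool" where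
  "two_out_of_three C W \<longleftrightarrow>
     (\<forall>f\<in>Ar C. \<forall>g\<in>Ar C. Cod C f = Dom C g \<longrightarrow>
        ((f \<in> W \<and> g \<in> W \<longrightarrow> Cmp C g f \<in> W) \<and>
         (f \<in> W \<and> Cmp C g f \<in> W \<longrightarrow> g \<in> W) \<and>
         (g \<in> W \<and> Cmp C g f \<in> W \<longrightarrow> f \<in> W)))"

definition retract_of :: "('o, 'a) cat \<Rightarrow> 'a \<Rightarrow> 'a \<Rightarrow> bool" where
  "retract_of C f g \<longleftrightarrow> f \<in> Ar C \<and> g \<in> Ar C \<and>
     (\<exists>i r i' r'. i \<in> hom C (Dom C f) (Dom C g) \<and> r \<in> hom C (Dom C g) (Dom C f) \<and>
        i' \<in> hom C (Cod C f) (Cod C g) \<and> r' \<in> hom C (Cod C g) (Cod C f) \<and>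
        Cmp C r i = Idt C (Dom C f) \<and> Cmp C r' i' = Idt C (Cod C f) \<and>
        Cmp C g i = Cmp C i' f \<and> Cmp C f r = Cmp C r' g)"

definition closed_under_retracts :: "('o, 'a) cat \<Rightarrow> 'a set \<Rightarrow> bool" where
  "closed_under_retracts C S \<longleftrightarrow> (\<forall>f g. retract_of C f g \<and> g \<in> S \<longrightarrow> f \<in> S)"

definition llp :: "('o, 'a) cat \<Rightarrow> 'a \<Rightarrow> 'a \<Rightarrow> bool" where
  "llp C i p \<longleftrightarrow>
     (\<forall>u v. u \<in> hom C (Dom C i) (Dom C p) \<and> v \<in> hom C (Cod C i) (Cod C p) \<and>
            Cmp C p u = Cmp C v i \<longrightarrow>
        (\<exists>h\<in>hom C (Cod C i) (Dom C p). Cmp C h i = u \<and> Cmp C p h = v))"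

definition comm_square :: "('o, 'a) cat \<Rightarrow> 'a \<Rightarrow> 'a \<Rightarrow> 'a \<Rightarrow> 'a \<Rightarrow> bool" where
  "comm_square C f g u v \<longleftrightarrow> f \<in> Ar C \<and> g \<in> Ar C \<and>
     u \<in> hom C (Dom C f) (Dom C g) \<and> v \<in> hom C (Cod C f) (Cod C g) \<and>
     Cmp C g u = Cmp C v f"

definition functorial_factorization ::
  "('o, 'a) cat \<Rightarrow> ('a \<Rightarrow> 'a) \<Rightarrow> ('a \<Rightarrow> 'a) \<Rightarrow> ('a \<Rightarrow> 'a \<Rightarrow> 'a \<Rightarrow> 'a \<Rightarrow> 'a) \<Rightarrow> bool" where
  "functorial_factorization C L R M \<longleftrightarrow>
     (\<forall>f\<in>Ar C. L f \<in> Ar C \<and> R f \<in> Ar C \<and> Dom C (L f) = Dom C f \<and> Cod C (R f) = Cod C f \<and>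
                Cod C (L f) = Dom C (R f) \<and> Cmp C (R f) (L f) = f) \<and>
     (\<forall>f g u v. comm_square C f g u v \<longrightarrow>
        M f g u v \<in> hom C (Cod C (L f)) (Cod C (L g)) \<and>
        Cmp C (M f g u v) (L f) = Cmp C (L g) u \<and>
        Cmp C (R g) (M f g u v) = Cmp C v (R f)) \<and>
     (\<forall>f\<in>Ar C. M f f (Idt C (Dom C f)) (Idt C (Cod C f)) = Idt C (Cod C (L f))) \<and>
     (\<forall>f g h u v u' v'. comm_square C f g u v \<and> comm_square C g h u' v' \<longrightarrow>
        M f h (Cmp C u' u) (Cmp C v' v) = Cmp C (M g h u' v') (M f g u v))"

definition model_category :: "('o, 'a) cat \<Rightarrow> 'a set \<Rightarrow> 'a set \<Rightarrow> 'a set \<Rightarrow> bool" where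
  "model_category C W Cof Fib \<longleftrightarrow>
     category C \<and> finitely_bicomplete C \<and>
     wide_subcategory C W \<and> wide_subcategory C Cof \<and> wide_subcategory C Fib \<and>
     two_out_of_three C W \<and>
     closed_under_retracts C W \<and> closed_under_retracts C Cof \<and> closed_under_retracts C Fib \<and>
     (\<forall>i\<in>Cof \<inter> W. \<forall>p\<in>Fib. llp C i p) \<and>
     (\<forall>i\<in>Cof. \<forall>p\<in>Fib \<inter> W. llp C i p) \<and>
     (\<exists>L R M. functorial_factorization C L R M \<and> (\<forall>f\<in>Ar C. L f \<in> Cof \<inter> W \<and> R f \<in> Fib)) \<and>
     (\<exists>L R M. functorial_factorization C L R M \<and> (\<forall>f\<in>Ar C. L f \<in> Cof \<and> R f \<in> Fib \<inter> W))"

text \<open>An object (a, b, c) encodes the zig-zag  X <-a- U -b-> V <-c- Y.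
  A morphism (s, t, u, v) goes from s to t with u : U -> U', v : V -> V'.\<close>

definition zz_obj :: "('o, 'a) cat \<Rightarrow> 'a set \<Rightarrow> 'o \<Rightarrow> 'o \<Rightarrow> 'a \<times> 'a \<times> 'a \<Rightarrow> bool" where
  "zz_obj C W X Y z \<longleftrightarrow> (case z of (a, b, c) \<Rightarrow>
     a \<in> W \<and> c \<in> W \<and> a \<in> Ar C \<and> b \<in> Ar C \<and> c \<in> Ar C \<and>
     Cod C a = X \<and> Dom C b = Dom C a \<and> Dom C c = Y \<and> Cod C b = Cod C c)"

definition zz_arr :: "('o, 'a) cat \<Rightarrow> 'a set \<Rightarrow> 'o \<Rightarrow> 'o \<Rightarrow>
    ('a \<times> 'a \<times> 'a) \<times> ('a \<times> 'a \<times> 'a) \<times> 'a \<times> 'a \<Rightarrow> bool" where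
  "zz_arr C W X Y m \<longleftrightarrow> (case m of ((a, b, c), (a', b', c'), u, v) \<Rightarrow>
     zz_obj C W X Y (a, b, c) \<and> zz_obj C W X Y (a', b', c') \<and>
     u \<in> W \<and> v \<in> W \<and>
     u \<in> hom C (Dom C a) (Dom C a') \<and> v \<in> hom C (Cod C b) (Cod C b') \<and>
     Cmp C a' u = a \<and> Cmp C b' u = Cmp C v b \<and> Cmp C v c = c')"

definition HomCat :: "('o, 'a) cat \<Rightarrow> 'a set \<Rightarrow> 'o \<Rightarrow> 'o \<Rightarrow>
    ('a \<times> 'a \<times> 'a, ('a \<times> 'a \<times> 'a) \<times> ('a \<times> 'a \<times> 'a) \<times> 'a \<times> 'a) cat" where
  "HomCat C W X Y =
     \<lparr> Ob = {z. zz_obj C W X Y z},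
       Ar = {m. zz_arr C W X Y m},
       Dom = (\<lambda>m. fst m),
       Cod = (\<lambda>m. fst (snd m)),
       Idt = (\<lambda>z. (z, z, Idt C (Dom C (fst z)), Idt C (Cod C (fst (snd z))))),
       Cmp = (\<lambda>g f. (fst f, fst (snd g),
                      Cmp C (fst (snd (snd g))) (fst (snd (snd f))),
                      Cmp C (snd (snd (snd g))) (snd (snd (snd f))))) \<rparr>"

definition full_subcat :: "('o, 'a) cat \<Rightarrow> ('o \<Rightarrow> bool) \<Rightarrow> ('o, 'a) cat" where
  "full_subcat C P = C\<lparr>Ob := {x \<in> Ob C. P x}, Ar := {f \<in> Ar C. P (Dom C f) \<and> P (Cod C f)}\<rparr>"

text \<open>(WCofib)^{-1} M (WFib)^{-1}(X,Y): U -> X a trivial fibration, Y -> V a trivial cofibration.\<close>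
definition WCWFCat :: "('o, 'a) cat \<Rightarrow> 'a set \<Rightarrow> 'a set \<Rightarrow> 'a set \<Rightarrow> 'o \<Rightarrow> 'o \<Rightarrow>
    ('a \<times> 'a \<times> 'a, ('a \<times> 'a \<times> 'a) \<times> ('a \<times> 'a \<times> 'a) \<times> 'a \<times> 'a) cat" where
  "WCWFCat C W Cof Fib X Y =
     full_subcat (HomCat C W X Y) (\<lambda>(a, b, c). a \<in> Fib \<inter> W \<and> c \<in> Cof \<inter> W)"

type_synonym ('o, 'a, 'p, 'b) fnctr = "('o \<Rightarrow> 'p) \<times> ('a \<Rightarrow> 'b)"

definition is_functor :: "('o, 'a) cat \<Rightarrow> ('p, 'b) cat \<Rightarrow> ('o, 'a, 'p, 'b) fnctr \<Rightarrow> bool" where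
  "is_functor C D F \<longleftrightarrow>
     (\<forall>x\<in>Ob C. fst F x \<in> Ob D \<and> snd F (Idt C x) = Idt D (fst F x)) \<and>
     (\<forall>f\<in>Ar C. snd F f \<in> hom D (fst F (Dom C f)) (fst F (Cod C f))) \<and>
     (\<forall>f\<in>Ar C. \<forall>g\<in>Ar C. Cod C f = Dom C g \<longrightarrow>
        snd F (Cmp C g f) = Cmp D (snd F g) (snd F f))"

definition id_functor :: "('o, 'a, 'o, 'a) fnctr" where
  "id_functor = (id, id)"

definition functor_comp :: "('p, 'b, 'q, 'c) fnctr \<Rightarrow> ('o, 'a, 'p, 'b) fnctr \<Rightarrow>
    ('o, 'a, 'q, 'c) fnctr" where
  "functor_comp G F = (fst G \<circ> fst F, snd G \<circ> snd F)"

definition nat_trans :: "('o, 'a) cat \<Rightarrow> ('p, 'b) cat \<Rightarrow> ('o, 'a, 'p, 'b) fnctr \<Rightarrow>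
    ('o, 'a, 'p, 'b) fnctr \<Rightarrow> ('o \<Rightarrow> 'b) \<Rightarrow> bool" where
  "nat_trans C D F G \<eta> \<longleftrightarrow> is_functor C D F \<and> is_functor C D G \<and>
     (\<forall>x\<in>Ob C. \<eta> x \<in> hom D (fst F x) (fst G x)) \<and>
     (\<forall>f\<in>Ar C. Cmp D (snd G f) (\<eta> (Dom C f)) = Cmp D (\<eta> (Cod C f)) (snd F f))"

inductive nt_zigzag :: "('o, 'a) cat \<Rightarrow> ('p, 'b) cat \<Rightarrow> ('o, 'a, 'p, 'b) fnctr \<Rightarrow>
    ('o, 'a, 'p, 'b) fnctr \<Rightarrow> bool"
  for C :: "('o, 'a) cat" and D :: "('p, 'b) cat" where
  zz_refl: "is_functor C D F \<Longrightarrow> nt_zigzag C D F F"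
| zz_fwd: "nt_zigzag C D F G \<Longrightarrow> nat_trans C D G H \<eta> \<Longrightarrow> nt_zigzag C D F H"
| zz_bwd: "nt_zigzag C D F G \<Longrightarrow> nat_trans C D H G \<eta> \<Longrightarrow> nt_zigzag C D F H"

definition homotopy_equivalence :: "('o, 'a) cat \<Rightarrow> ('p, 'b) cat \<Rightarrow> ('o, 'a, 'p, 'b) fnctr \<Rightarrow> bool" where
  "homotopy_equivalence C D F \<longleftrightarrow> is_functor C D F \<and>
     (\<exists>G. is_functor D C G \<and>
          nt_zigzag D D (functor_comp F G) id_functor \<and>
          nt_zigzag C C (functor_comp G F) id_functor)"

end

theory Submission
  imports Defs
begin

definition is_pb :: "('o,'a) cat \<Rightarrow> 'a \<Rightarrow> 'a \<Rightarrow> 'a \<Rightarrow> 'a \<Rightarrow> bool" where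
  "is_pb C f g p q \<longleftrightarrow> p \<in> Ar C \<and> q \<in> Ar C \<and> Dom C p = Dom C q \<and> Cod C p = Dom C f \<and>
               Cod C q = Dom C g \<and> Cmp C f p = Cmp C g q \<and>
               (\<forall>a\<in>Ar C. \<forall>b\<in>Ar C. Dom C a = Dom C b \<and> Cod C a = Dom C f \<and>
                   Cod C b = Dom C g \<and> Cmp C f a = Cmp C g b \<longrightarrow>
                   (\<exists>!h. h \<in> hom C (Dom C a) (Dom C p) \<and> Cmp C p h = a \<and> Cmp C q h = b))"

definition is_po :: "('o,'a) cat \<Rightarrow> 'a \<Rightarrow> 'a \<Rightarrow> 'a \<Rightarrow> 'a \<Rightarrow> bool" where
  "is_po C f g p q \<longleftrightarrow> p \<in> Ar C \<and> q \<in> Ar C \<and> Cod C p = Cod C q \<and> Dom C p = Cod C f \<and>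
               Dom C q = Cod C g \<and> Cmp C p f = Cmp C q g \<and>
               (\<forall>a\<in>Ar C. \<forall>b\<in>Ar C. Cod C a = Cod C b \<and> Dom C a = Cod C f \<and>
                   Dom C b = Cod C g \<and> Cmp C a f = Cmp C b g \<longrightarrow>
                   (\<exists>!h. h \<in> hom C (Cod C p) (Cod C a) \<and> Cmp C h p = a \<and> Cmp C h q = b))"

lemma has_pb_ex:
  assumes "has_pullbacks C" "f \<in> Ar C" "g \<in> Ar C" "Cod C f = Cod C g"
  shows "\<exists>p q. is_pb C f g p q"
  using assms unfolding has_pullbacks_def is_pb_def by blast

lemma has_po_ex:
  assumes "has_pullbacks (op_cat C)" "f \<in> Ar C" "g \<in> Ar C" "Dom C f = Dom C g"
  shows "\<exists>p q. is_po C f g p q"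
proof -
  have hop: "hom (op_cat C) x y = hom C y x" for x y
    by (auto simp: hom_def op_cat_def)
  show ?thesis
    using assms unfolding has_pullbacks_def is_po_def hop
    by (simp add: op_cat_def hom_def)
qed


locale mc =
  fixes C :: "('o,'a) cat" and W Cof Fib :: "'a set"
    and L1 R1 :: "'a \<Rightarrow> 'a" and M1 :: "'a \<Rightarrow> 'a \<Rightarrow> 'a \<Rightarrow> 'a \<Rightarrow> 'a"
    and L2 R2 :: "'a \<Rightarrow> 'a" and M2 :: "'a \<Rightarrow> 'a \<Rightarrow> 'a \<Rightarrow> 'a \<Rightarrow> 'a"
  assumes model: "model_category C W Cof Fib"
    and ff1: "functorial_factorization C L1 R1 M1" and f1: "\<forall>f\<in>Ar C. L1 f \<in> Cof \<inter> W \<and> R1 f \<in> Fib"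
    and ff2: "functorial_factorization C L2 R2 M2" and f2: "\<forall>f\<in>Ar C. L2 f \<in> Cof \<and> R2 f \<in> Fib \<inter> W"
begin

abbreviation comp (infixr "\<cdot>" 75) where "g \<cdot> f \<equiv> Cmp C g f"

lemma cat: "category C" using model by (simp add: model_category_def)

lemma ar_ob: "f \<in> Ar C \<Longrightarrow> Dom C f \<in> Ob C" "f \<in> Ar C \<Longrightarrow> Cod C f \<in> Ob C"
  using cat by (auto simp: category_def)

lemma cmp_ar[simp]: "f \<in> Ar C \<Longrightarrow> g \<in> Ar C \<Longrightarrow> Cod C f = Dom C g \<Longrightarrow> g \<cdot> f \<in> Ar C"
  using cat by (auto simp: category_def hom_def)
lemma cmp_dom[simp]: "f \<in> Ar C \<Longrightarrow> g \<in> Ar C \<Longrightarrow> Cod C f = Dom C g \<Longrightarrow> Dom C (g \<cdot> f) = Dom C f"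
  using cat by (auto simp: category_def hom_def)
lemma cmp_cod[simp]: "f \<in> Ar C \<Longrightarrow> g \<in> Ar C \<Longrightarrow> Cod C f = Dom C g \<Longrightarrow> Cod C (g \<cdot> f) = Cod C g"
  using cat by (auto simp: category_def hom_def)
lemma idt_ar[simp]: "x \<in> Ob C \<Longrightarrow> Idt C x \<in> Ar C" "x \<in> Ob C \<Longrightarrow> Dom C (Idt C x) = x"
   "x \<in> Ob C \<Longrightarrow> Cod C (Idt C x) = x"
  using cat by (auto simp: category_def hom_def)
lemma idl[simp]: "f \<in> Ar C \<Longrightarrow> Idt C (Cod C f) \<cdot> f = f"
  using cat by (auto simp: category_def hom_def)
lemma idr[simp]: "f \<in> Ar C \<Longrightarrow> f \<cdot> Idt C (Dom C f) = f"
  using cat by (auto simp: category_def hom_def)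
lemma idl'[simp]: "f \<in> Ar C \<Longrightarrow> Cod C f = x \<Longrightarrow> Idt C x \<cdot> f = f"
  using idl by blast
lemma idr'[simp]: "f \<in> Ar C \<Longrightarrow> Dom C f = x \<Longrightarrow> f \<cdot> Idt C x = f"
  using idr by blast
lemma assoc: "f \<in> Ar C \<Longrightarrow> g \<in> Ar C \<Longrightarrow> h \<in> Ar C \<Longrightarrow> Cod C f = Dom C g \<Longrightarrow> Cod C g = Dom C h \<Longrightarrow>
   h \<cdot> (g \<cdot> f) = (h \<cdot> g) \<cdot> f"
  using cat unfolding category_def by metis

lemma wideW: "wide_subcategory C W" and wideCof: "wide_subcategory C Cof" and wideFib: "wide_subcategory C Fib"
  using model by (auto simp: model_category_def)

lemma W_ar: "f \<in> W \<Longrightarrow> f \<in> Ar C" using wideW by (auto simp: wide_subcategory_def)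
lemma Cof_ar: "f \<in> Cof \<Longrightarrow> f \<in> Ar C" using wideCof by (auto simp: wide_subcategory_def)
lemma Fib_ar: "f \<in> Fib \<Longrightarrow> f \<in> Ar C" using wideFib by (auto simp: wide_subcategory_def)
lemma W_cmp: "f \<in> W \<Longrightarrow> g \<in> W \<Longrightarrow> Cod C f = Dom C g \<Longrightarrow> g \<cdot> f \<in> W"
  using wideW by (auto simp: wide_subcategory_def)
lemma Cof_cmp: "f \<in> Cof \<Longrightarrow> g \<in> Cof \<Longrightarrow> Cod C f = Dom C g \<Longrightarrow> g \<cdot> f \<in> Cof"
  using wideCof by (auto simp: wide_subcategory_def)
lemma Fib_cmp: "f \<in> Fib \<Longrightarrow> g \<in> Fib \<Longrightarrow> Cod C f = Dom C g \<Longrightarrow> g \<cdot> f \<in> Fib"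
  using wideFib by (auto simp: wide_subcategory_def)
lemma W_id: "x \<in> Ob C \<Longrightarrow> Idt C x \<in> W"
  using wideW by (auto simp: wide_subcategory_def)

lemma tot: "two_out_of_three C W" using model by (simp add: model_category_def)
lemma W_cancel_l: "f \<in> Ar C \<Longrightarrow> g \<in> Ar C \<Longrightarrow> Cod C f = Dom C g \<Longrightarrow> f \<in> W \<Longrightarrow> g \<cdot> f \<in> W \<Longrightarrow> g \<in> W"
  using tot unfolding two_out_of_three_def by blast
lemma W_cancel_r: "f \<in> Ar C \<Longrightarrow> g \<in> Ar C \<Longrightarrow> Cod C f = Dom C g \<Longrightarrow> g \<in> W \<Longrightarrow> g \<cdot> f \<in> W \<Longrightarrow> f \<in> W"
  using tot unfolding two_out_of_three_def by blast

lemma F2: assumes "f \<in> Ar C"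
  shows "L2 f \<in> Ar C" "R2 f \<in> Ar C" "Dom C (L2 f) = Dom C f" "Cod C (R2 f) = Cod C f"
    "Cod C (L2 f) = Dom C (R2 f)" "R2 f \<cdot> L2 f = f" "L2 f \<in> Cof" "R2 f \<in> Fib" "R2 f \<in> W"
  using assms ff2 f2 unfolding functorial_factorization_def by auto

lemma L2W: assumes "f \<in> W" shows "L2 f \<in> W"
proof -
  have f: "f \<in> Ar C" using assms W_ar by blast
  show ?thesis using W_cancel_r[of "L2 f" "R2 f"] F2[OF f] assms by auto
qed

lemma M2: assumes "comm_square C f g u v"
  shows "M2 f g u v \<in> Ar C" "Dom C (M2 f g u v) = Cod C (L2 f)" "Cod C (M2 f g u v) = Cod C (L2 g)"
    "M2 f g u v \<cdot> L2 f = L2 g \<cdot> u" "R2 g \<cdot> M2 f g u v = v \<cdot> R2 f"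
  using assms ff2 unfolding functorial_factorization_def hom_def by auto

lemma M2_id: "f \<in> Ar C \<Longrightarrow> M2 f f (Idt C (Dom C f)) (Idt C (Cod C f)) = Idt C (Cod C (L2 f))"
  using ff2 unfolding functorial_factorization_def by auto

lemma M2_comp: "comm_square C f g u v \<Longrightarrow> comm_square C g h u' v' \<Longrightarrow>
        M2 f h (u' \<cdot> u) (v' \<cdot> v) = M2 g h u' v' \<cdot> M2 f g u v"
  using ff2 unfolding functorial_factorization_def by blast

lemma F1: assumes "f \<in> Ar C"
  shows "L1 f \<in> Ar C" "R1 f \<in> Ar C" "Dom C (L1 f) = Dom C f" "Cod C (R1 f) = Cod C f"
    "Cod C (L1 f) = Dom C (R1 f)" "R1 f \<cdot> L1 f = f" "L1 f \<in> Cof" "L1 f \<in> W" "R1 f \<in> Fib"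
  using assms ff1 f1 unfolding functorial_factorization_def by auto

lemma lift1: "i \<in> Cof \<inter> W \<Longrightarrow> p \<in> Fib \<Longrightarrow> llp C i p"
  using model by (simp add: model_category_def)
lemma lift2: "i \<in> Cof \<Longrightarrow> p \<in> Fib \<inter> W \<Longrightarrow> llp C i p"
  using model by (simp add: model_category_def)

lemma retW: "retract_of C f g \<Longrightarrow> g \<in> W \<Longrightarrow> f \<in> W"
  and retCof: "retract_of C f g \<Longrightarrow> g \<in> Cof \<Longrightarrow> f \<in> Cof"
  and retFib: "retract_of C f g \<Longrightarrow> g \<in> Fib \<Longrightarrow> f \<in> Fib"
  using model by (auto simp: model_category_def closed_under_retracts_def)

lemma rlp_char: assumes p: "p \<in> Ar C" and l: "\<forall>i\<in>Cof. llp C i p" shows "p \<in> Fib \<inter> W"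
proof -
  note F = F2[OF p]
  have "llp C (L2 p) p" using l F by auto
  moreover have "Idt C (Dom C p) \<in> hom C (Dom C (L2 p)) (Dom C p)" "R2 p \<in> hom C (Cod C (L2 p)) (Cod C p)"
    "p \<cdot> Idt C (Dom C p) = R2 p \<cdot> L2 p"
    using F p ar_ob by (auto simp: hom_def)
  ultimately obtain h where h: "h \<in> hom C (Cod C (L2 p)) (Dom C p)" "h \<cdot> L2 p = Idt C (Dom C p)" "p \<cdot> h = R2 p"
    unfolding llp_def by blast
  have r: "retract_of C p (R2 p)"
    unfolding retract_of_def
    apply (rule conjI, fact p, rule conjI, fact F(2))
    apply (rule exI[of _ "L2 p"], rule exI[of _ h], rule exI[of _ "Idt C (Cod C p)"], rule exI[of _ "Idt C (Cod C p)"])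
    using F h p ar_ob by (auto simp: hom_def)
  show ?thesis using retW[OF r] retFib[OF r] F by auto
qed

lemma llp_char: assumes i: "i \<in> Ar C" and l: "\<forall>p\<in>Fib. llp C i p" shows "i \<in> Cof \<inter> W"
proof -
  note F = F1[OF i]
  have "llp C i (R1 i)" using l F by auto
  moreover have "L1 i \<in> hom C (Dom C i) (Dom C (R1 i))" "Idt C (Cod C i) \<in> hom C (Cod C i) (Cod C (R1 i))"
    "R1 i \<cdot> L1 i = Idt C (Cod C i) \<cdot> i"
    using F i ar_ob by (auto simp: hom_def)
  ultimately obtain h where h: "h \<in> hom C (Cod C i) (Dom C (R1 i))" "h \<cdot> i = L1 i" "R1 i \<cdot> h = Idt C (Cod C i)"
    unfolding llp_def by blast
  have r: "retract_of C i (L1 i)"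
    unfolding retract_of_def
    apply (rule conjI, fact i, rule conjI, fact F(1))
    apply (rule exI[of _ "Idt C (Dom C i)"], rule exI[of _ "Idt C (Dom C i)"], rule exI[of _ h], rule exI[of _ "R1 i"])
    using F h i ar_ob by (auto simp: hom_def)
  show ?thesis using retW[OF r] retCof[OF r] F by auto
qed


lemma hpb: "has_pullbacks C" and hpo: "has_pullbacks (op_cat C)"
  using model by (auto simp: model_category_def finitely_bicomplete_def)

definition "pbPQ f g = (SOME pq. is_pb C f g (fst pq) (snd pq))"
definition "pbP f g = fst (pbPQ f g)"
definition "pbQ f g = snd (pbPQ f g)"
definition "pbH f g a b = (THE h. h \<in> hom C (Dom C a) (Dom C (pbP f g)) \<and> pbP f g \<cdot> h = a \<and> pbQ f g \<cdot> h = b)"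

lemma pb_is: assumes "f \<in> Ar C" "g \<in> Ar C" "Cod C f = Cod C g"
  shows "is_pb C f g (pbP f g) (pbQ f g)"
proof -
  obtain p q where "is_pb C f g p q" using has_pb_ex[OF hpb assms] by blast
  then have "is_pb C f g (fst (p,q)) (snd (p,q))" by simp
  then show ?thesis unfolding pbP_def pbQ_def pbPQ_def by (rule someI)
qed

context
  fixes f g assumes fg: "f \<in> Ar C" "g \<in> Ar C" "Cod C f = Cod C g"
begin
lemma pb: "pbP f g \<in> Ar C" "pbQ f g \<in> Ar C" "Dom C (pbQ f g) = Dom C (pbP f g)"
   "Cod C (pbP f g) = Dom C f" "Cod C (pbQ f g) = Dom C g" "f \<cdot> pbP f g = g \<cdot> pbQ f g"
  using pb_is[OF fg] unfolding is_pb_def by auto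

lemma pbH: assumes "a \<in> Ar C" "b \<in> Ar C" "Dom C a = Dom C b" "Cod C a = Dom C f" "Cod C b = Dom C g"
   "f \<cdot> a = g \<cdot> b"
  shows "pbH f g a b \<in> Ar C" "Dom C (pbH f g a b) = Dom C a" "Cod C (pbH f g a b) = Dom C (pbP f g)"
    "pbP f g \<cdot> pbH f g a b = a" "pbQ f g \<cdot> pbH f g a b = b"
    "\<And>h. h \<in> Ar C \<Longrightarrow> Dom C h = Dom C a \<Longrightarrow> Cod C h = Dom C (pbP f g) \<Longrightarrow> pbP f g \<cdot> h = a \<Longrightarrow>
       pbQ f g \<cdot> h = b \<Longrightarrow> h = pbH f g a b"
proof -
  have ex: "\<exists>!h. h \<in> hom C (Dom C a) (Dom C (pbP f g)) \<and> pbP f g \<cdot> h = a \<and> pbQ f g \<cdot> h = b"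
    using pb_is[OF fg] assms unfolding is_pb_def by blast
  have t: "pbH f g a b \<in> hom C (Dom C a) (Dom C (pbP f g)) \<and> pbP f g \<cdot> pbH f g a b = a \<and> pbQ f g \<cdot> pbH f g a b = b"
    unfolding pbH_def by (rule theI'[OF ex])
  then show "pbH f g a b \<in> Ar C" "Dom C (pbH f g a b) = Dom C a" "Cod C (pbH f g a b) = Dom C (pbP f g)"
    "pbP f g \<cdot> pbH f g a b = a" "pbQ f g \<cdot> pbH f g a b = b" by (auto simp: hom_def)
  show "h = pbH f g a b" if "h \<in> Ar C" "Dom C h = Dom C a" "Cod C h = Dom C (pbP f g)" "pbP f g \<cdot> h = a"
       "pbQ f g \<cdot> h = b" for h
    using ex t that by (auto simp: hom_def)
qed
end

definition "poPQ f g = (SOME pq. is_po C f g (fst pq) (snd pq))"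
definition "poP f g = fst (poPQ f g)"
definition "poQ f g = snd (poPQ f g)"
definition "poH f g a b = (THE h. h \<in> hom C (Cod C (poP f g)) (Cod C a) \<and> h \<cdot> poP f g = a \<and> h \<cdot> poQ f g = b)"

lemma po_is: assumes "f \<in> Ar C" "g \<in> Ar C" "Dom C f = Dom C g"
  shows "is_po C f g (poP f g) (poQ f g)"
proof -
  obtain p q where "is_po C f g p q" using has_po_ex[OF hpo assms] by blast
  then have "is_po C f g (fst (p,q)) (snd (p,q))" by simp
  then show ?thesis unfolding poP_def poQ_def poPQ_def by (rule someI)
qed

context
  fixes f g assumes fg: "f \<in> Ar C" "g \<in> Ar C" "Dom C f = Dom C g"
begin
lemma po: "poP f g \<in> Ar C" "poQ f g \<in> Ar C" "Cod C (poQ f g) = Cod C (poP f g)"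
   "Dom C (poP f g) = Cod C f" "Dom C (poQ f g) = Cod C g" "poP f g \<cdot> f = poQ f g \<cdot> g"
  using po_is[OF fg] unfolding is_po_def by auto

lemma poH: assumes "a \<in> Ar C" "b \<in> Ar C" "Cod C a = Cod C b" "Dom C a = Cod C f" "Dom C b = Cod C g"
   "a \<cdot> f = b \<cdot> g"
  shows "poH f g a b \<in> Ar C" "Cod C (poH f g a b) = Cod C a" "Dom C (poH f g a b) = Cod C (poP f g)"
    "poH f g a b \<cdot> poP f g = a" "poH f g a b \<cdot> poQ f g = b"
    "\<And>h. h \<in> Ar C \<Longrightarrow> Cod C h = Cod C a \<Longrightarrow> Dom C h = Cod C (poP f g) \<Longrightarrow> h \<cdot> poP f g = a \<Longrightarrow>
       h \<cdot> poQ f g = b \<Longrightarrow> h = poH f g a b"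
proof -
  have ex: "\<exists>!h. h \<in> hom C (Cod C (poP f g)) (Cod C a) \<and> h \<cdot> poP f g = a \<and> h \<cdot> poQ f g = b"
    using po_is[OF fg] assms unfolding is_po_def by blast
  have t: "poH f g a b \<in> hom C (Cod C (poP f g)) (Cod C a) \<and> poH f g a b \<cdot> poP f g = a \<and> poH f g a b \<cdot> poQ f g = b"
    unfolding poH_def by (rule theI'[OF ex])
  then show "poH f g a b \<in> Ar C" "Cod C (poH f g a b) = Cod C a" "Dom C (poH f g a b) = Cod C (poP f g)"
    "poH f g a b \<cdot> poP f g = a" "poH f g a b \<cdot> poQ f g = b" by (auto simp: hom_def)
  show "h = poH f g a b" if "h \<in> Ar C" "Cod C h = Cod C a" "Dom C h = Cod C (poP f g)" "h \<cdot> poP f g = a"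
       "h \<cdot> poQ f g = b" for h
    using ex t that by (auto simp: hom_def)
qed
end

lemma pb_triv: assumes f: "f \<in> Ar C" and g: "g \<in> Fib \<inter> W" and c: "Cod C f = Cod C g"
  shows "pbP f g \<in> Fib \<inter> W"
proof -
  have gA: "g \<in> Ar C" using g Fib_ar by blast
  note P = pb[OF f gA c]
  note H = pbH[OF f gA c]
  let ?p = "pbP f g" and ?q = "pbQ f g"
  have "llp C i ?p" if i: "i \<in> Cof" for i
    unfolding llp_def
  proof (intro allI impI)
    fix u v assume uv: "u \<in> hom C (Dom C i) (Dom C ?p) \<and> v \<in> hom C (Cod C i) (Cod C ?p) \<and> ?p \<cdot> u = v \<cdot> i"
    have iA: "i \<in> Ar C" using i Cof_ar by blast
    have u: "u \<in> Ar C" "Dom C u = Dom C i" "Cod C u = Dom C ?p" and v: "v \<in> Ar C" "Dom C v = Cod C i" "Cod C v = Dom C f"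
      and sq: "?p \<cdot> u = v \<cdot> i" using uv P by (auto simp: hom_def)
    have "g \<cdot> (?q \<cdot> u) = (g \<cdot> ?q) \<cdot> u" using assoc P u gA by auto
    also have "\<dots> = (f \<cdot> ?p) \<cdot> u" using P by simp
    also have "\<dots> = f \<cdot> (?p \<cdot> u)" using assoc P u f by auto
    also have "\<dots> = f \<cdot> (v \<cdot> i)" using sq by simp
    also have "\<dots> = (f \<cdot> v) \<cdot> i" using assoc v iA f by auto
    finally have sq2: "g \<cdot> (?q \<cdot> u) = (f \<cdot> v) \<cdot> i" .
    have "llp C i g" using lift2 i g by blast
    moreover have "?q \<cdot> u \<in> hom C (Dom C i) (Dom C g)" "f \<cdot> v \<in> hom C (Cod C i) (Cod C g)"
      using P u v f gA c by (auto simp: hom_def)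
    ultimately obtain k where k: "k \<in> hom C (Cod C i) (Dom C g)" "k \<cdot> i = ?q \<cdot> u" "g \<cdot> k = f \<cdot> v"
      using sq2 unfolding llp_def by blast
    have kA: "k \<in> Ar C" "Dom C k = Cod C i" "Cod C k = Dom C g" using k by (auto simp: hom_def)
    note HH = H[of v k]
    have hyps: "Dom C v = Dom C k" "f \<cdot> v = g \<cdot> k" using kA v k by auto
    let ?h = "pbH f g v k"
    have h: "?h \<in> Ar C" "Dom C ?h = Cod C i" "Cod C ?h = Dom C ?p" "?p \<cdot> ?h = v" "?q \<cdot> ?h = k"
      using HH(1-5) v kA hyps by auto
    have "?h \<cdot> i = u"
    proof -
      have a1: "?p \<cdot> (?h \<cdot> i) = ?p \<cdot> u" using assoc[of i ?h ?p] h iA P sq by simp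
      have a2: "?q \<cdot> (?h \<cdot> i) = ?q \<cdot> u" using assoc[of i ?h ?q] h iA P k(2) by simp
      have fpu: "f \<cdot> (?p \<cdot> u) = g \<cdot> (?q \<cdot> u)" using assoc[of u ?p f] assoc[of u ?q g] P u f gA by simp
      have e1: "?h \<cdot> i = pbH f g (?p \<cdot> u) (?q \<cdot> u)"
        apply (rule H(6))
        using h iA u P f gA a1 a2 fpu by auto
      have e2: "u = pbH f g (?p \<cdot> u) (?q \<cdot> u)"
        apply (rule H(6))
        using h iA u P f gA fpu by auto
      show ?thesis using e1 e2 by simp
    qed
    then show "\<exists>h\<in>hom C (Cod C i) (Dom C ?p). h \<cdot> i = u \<and> ?p \<cdot> h = v"
      using h by (auto simp: hom_def)
  qed
  then show ?thesis using rlp_char P by blast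
qed


lemma po_triv: assumes f: "f \<in> Cof \<inter> W" and g: "g \<in> Ar C" and c: "Dom C f = Dom C g"
  shows "poQ f g \<in> Cof \<inter> W"
proof -
  have fA: "f \<in> Ar C" using f Cof_ar by blast
  note P = po[OF fA g c]
  note H = poH[OF fA g c]
  let ?p = "poP f g" and ?q = "poQ f g"
  have "llp C ?q p" if pF: "p \<in> Fib" for p
    unfolding llp_def
  proof (intro allI impI)
    fix u v assume uv: "u \<in> hom C (Dom C ?q) (Dom C p) \<and> v \<in> hom C (Cod C ?q) (Cod C p) \<and> p \<cdot> u = v \<cdot> ?q"
    have pA: "p \<in> Ar C" using pF Fib_ar by blast
    have u: "u \<in> Ar C" "Dom C u = Cod C g" "Cod C u = Dom C p" and v: "v \<in> Ar C" "Dom C v = Cod C ?p" "Cod C v = Cod C p"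
      and sq: "p \<cdot> u = v \<cdot> ?q" using uv P by (auto simp: hom_def)
    have "p \<cdot> (u \<cdot> g) = (p \<cdot> u) \<cdot> g" using assoc P u g pA by auto
    also have "\<dots> = (v \<cdot> ?q) \<cdot> g" using sq by simp
    also have "\<dots> = v \<cdot> (?q \<cdot> g)" using assoc P v g by auto
    also have "\<dots> = v \<cdot> (?p \<cdot> f)" using P by simp
    also have "\<dots> = (v \<cdot> ?p) \<cdot> f" using assoc[of f ?p v] v fA P by auto
    finally have sq2: "p \<cdot> (u \<cdot> g) = (v \<cdot> ?p) \<cdot> f" .
    have "llp C f p" using lift1 f pF by blast
    moreover have "u \<cdot> g \<in> hom C (Dom C f) (Dom C p)" "v \<cdot> ?p \<in> hom C (Cod C f) (Cod C p)"
      using P u v fA g c by (auto simp: hom_def)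
    ultimately obtain k where k: "k \<in> hom C (Cod C f) (Dom C p)" "k \<cdot> f = u \<cdot> g" "p \<cdot> k = v \<cdot> ?p"
      using sq2 unfolding llp_def by blast
    have kA: "k \<in> Ar C" "Dom C k = Cod C f" "Cod C k = Dom C p" using k by (auto simp: hom_def)
    note HH = H[of k u]
    have hyps: "Cod C k = Cod C u" "k \<cdot> f = u \<cdot> g" using kA u k by auto
    let ?h = "poH f g k u"
    have h: "?h \<in> Ar C" "Cod C ?h = Dom C p" "Dom C ?h = Cod C ?p" "?h \<cdot> ?p = k" "?h \<cdot> ?q = u"
      using HH(1-5) u kA hyps by auto
    have "p \<cdot> ?h = v"
    proof -
      have a1: "(p \<cdot> ?h) \<cdot> ?p = v \<cdot> ?p" using assoc[of ?p ?h p] h pA P k(3) by simp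
      have a2: "(p \<cdot> ?h) \<cdot> ?q = v \<cdot> ?q" using assoc[of ?q ?h p] h pA P sq by simp
      have fpu: "(v \<cdot> ?p) \<cdot> f = (v \<cdot> ?q) \<cdot> g" using assoc[of f ?p v] assoc[of g ?q v] P v fA g by simp
      have e1: "p \<cdot> ?h = poH f g (v \<cdot> ?p) (v \<cdot> ?q)"
        apply (rule H(6))
        using h pA v P fA g a1 a2 fpu by auto
      have e2: "v = poH f g (v \<cdot> ?p) (v \<cdot> ?q)"
        apply (rule H(6))
        using h pA v P fA g fpu by auto
      show ?thesis using e1 e2 by simp
    qed
    then show "\<exists>h\<in>hom C (Cod C ?q) (Dom C p). h \<cdot> ?q = u \<and> p \<cdot> h = v"
      using h P by (auto simp: hom_def)
  qed
  then show ?thesis using llp_char P by blast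
qed

end



lemma functor_comp_is: assumes F: "is_functor C D F" and G: "is_functor D E G"
  shows "is_functor C E (functor_comp G F)"
  using F G unfolding is_functor_def functor_comp_def hom_def
  by auto

lemma id_is: "is_functor C C id_functor"
  unfolding is_functor_def id_functor_def hom_def by auto

lemma fc_id_left[simp]: "functor_comp id_functor F = F"
  and fc_id_right[simp]: "functor_comp F id_functor = F"
  unfolding functor_comp_def id_functor_def by auto

lemma whisker: assumes "nat_trans D E F G \<eta>" "is_functor C D H"
  shows "nat_trans C E (functor_comp F H) (functor_comp G H) (\<eta> \<circ> fst H)"
  using assms functor_comp_is[OF assms(2)] unfolding nat_trans_def
  apply (intro conjI)
  apply blast
  apply blast
  apply (simp add: functor_comp_def is_functor_def)
  apply (simp add: functor_comp_def is_functor_def hom_def)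
  by (metis (no_types, lifting))

lemma hom_fs: "hom (full_subcat C P) x y = {f \<in> hom C x y. P x \<and> P y}"
  by (auto simp: hom_def full_subcat_def)

lemma fs_simps[simp]: "Ob (full_subcat C P) = {x \<in> Ob C. P x}"
  "Ar (full_subcat C P) = {f \<in> Ar C. P (Dom C f) \<and> P (Cod C f)}"
  "Dom (full_subcat C P) = Dom C" "Cod (full_subcat C P) = Cod C"
  "Idt (full_subcat C P) = Idt C" "Cmp (full_subcat C P) = Cmp C"
  by (auto simp: full_subcat_def)

lemma fs_restrict: assumes F: "is_functor C D F"
   and ob: "\<forall>f\<in>Ar C. Dom C f \<in> Ob C \<and> Cod C f \<in> Ob C"
   and PQ: "\<forall>x\<in>Ob C. P x \<longrightarrow> Q (fst F x)"
  shows "is_functor (full_subcat C P) (full_subcat D Q) F"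
  using F ob PQ unfolding is_functor_def hom_fs by (auto simp: hom_def)

lemma fs_into: assumes F: "is_functor C D F"
   and ob: "\<forall>f\<in>Ar C. Dom C f \<in> Ob C \<and> Cod C f \<in> Ob C"
   and PQ: "\<forall>x\<in>Ob C. Q (fst F x)"
  shows "is_functor C (full_subcat D Q) F"
  using F ob PQ unfolding is_functor_def hom_fs by (auto simp: hom_def)

lemma fs_incl: "is_functor (full_subcat C P) C id_functor"
  unfolding is_functor_def id_functor_def hom_def by auto

lemma nat_fs: assumes N: "nat_trans C D F G \<eta>"
   and ob: "\<forall>f\<in>Ar C. Dom C f \<in> Ob C \<and> Cod C f \<in> Ob C"
   and PF: "\<forall>x\<in>Ob C. P x \<longrightarrow> Q (fst F x)" and PG: "\<forall>x\<in>Ob C. P x \<longrightarrow> Q (fst G x)"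
  shows "nat_trans (full_subcat C P) (full_subcat D Q) F G \<eta>"
proof -
  have "is_functor (full_subcat C P) (full_subcat D Q) F" "is_functor (full_subcat C P) (full_subcat D Q) G"
    using fs_restrict N ob PF PG unfolding nat_trans_def by blast+
  then show ?thesis using N PF PG unfolding nat_trans_def hom_fs by auto
qed


locale mcH = mc +
  fixes X Y
  assumes XY: "X \<in> Ob C" "Y \<in> Ob C"
begin

abbreviation "H \<equiv> HomCat C W X Y"

lemma H_simps[simp]: "Ob H = {z. zz_obj C W X Y z}" "Ar H = {m. zz_arr C W X Y m}"
  "Dom H = fst" "Cod H = (\<lambda>m. fst (snd m))"
  "Idt H = (\<lambda>z. (z, z, Idt C (Dom C (fst z)), Idt C (Cod C (fst (snd z)))))"
  "Cmp H = (\<lambda>g f. (fst f, fst (snd g), fst (snd (snd g)) \<cdot> fst (snd (snd f)), snd (snd (snd g)) \<cdot> snd (snd (snd f))))"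
  by (auto simp: HomCat_def fun_eq_iff)

lemma hom_H: "m \<in> hom H x y \<longleftrightarrow> zz_arr C W X Y m \<and> fst m = x \<and> fst (snd m) = y"
  by (auto simp: hom_def)

lemma zz_obj_iff: "zz_obj C W X Y (a, b, c) \<longleftrightarrow> a \<in> W \<and> c \<in> W \<and> a \<in> Ar C \<and> b \<in> Ar C \<and> c \<in> Ar C \<and>
     Cod C a = X \<and> Dom C b = Dom C a \<and> Dom C c = Y \<and> Cod C b = Cod C c"
  by (simp add: zz_obj_def)

lemma zz_arr_iff: "zz_arr C W X Y ((a, b, c), (a', b', c'), u, v) \<longleftrightarrow>
     zz_obj C W X Y (a, b, c) \<and> zz_obj C W X Y (a', b', c') \<and>
     u \<in> W \<and> v \<in> W \<and> u \<in> Ar C \<and> Dom C u = Dom C a \<and> Cod C u = Dom C a' \<and>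
     v \<in> Ar C \<and> Dom C v = Cod C b \<and> Cod C v = Cod C b' \<and>
     a' \<cdot> u = a \<and> b' \<cdot> u = v \<cdot> b \<and> v \<cdot> c = c'"
  by (auto simp: zz_arr_def hom_def)

lemma H_ob: "\<forall>f\<in>Ar H. Dom H f \<in> Ob H \<and> Cod H f \<in> Ob H"
  by (auto simp: zz_arr_def split: prod.splits)

definition "G1o z = (case z of (a, b, c) \<Rightarrow> (a \<cdot> pbP b (R2 c), pbQ b (R2 c), L2 c))"
definition "G1a m = (case m of ((a, b, c), (a', b', c'), u, v) \<Rightarrow>
   (G1o (a, b, c), G1o (a', b', c'),
    pbH b' (R2 c') (u \<cdot> pbP b (R2 c)) (M2 c c' (Idt C (Dom C c)) v \<cdot> pbQ b (R2 c)),
    M2 c c' (Idt C (Dom C c)) v))"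
definition "e1 z = (case z of (a, b, c) \<Rightarrow> (G1o (a, b, c), (a, b, c), pbP b (R2 c), R2 c))"

lemma G1o_obj: assumes z: "zz_obj C W X Y (a, b, c)"
  shows "zz_obj C W X Y (G1o (a, b, c))"
    "a \<in> Fib \<inter> W \<Longrightarrow> c \<in> Cof \<inter> W \<Longrightarrow> fst (G1o (a, b, c)) \<in> Fib \<inter> W \<and> snd (snd (G1o (a, b, c))) \<in> Cof \<inter> W"
proof -
  have A: "a \<in> W" "c \<in> W" "a \<in> Ar C" "b \<in> Ar C" "c \<in> Ar C" "Cod C a = X" "Dom C b = Dom C a"
     "Dom C c = Y" "Cod C b = Cod C c" using z by (auto simp: zz_obj_iff)
  note F = F2[OF A(5)]
  have cc: "Cod C b = Cod C (R2 c)" using A F by simp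
  note P = pb[OF A(4) F(2) cc]
  have pT: "pbP b (R2 c) \<in> Fib \<inter> W" using pb_triv[OF A(4) _ cc] F by blast
  show "zz_obj C W X Y (G1o (a, b, c))"
    unfolding G1o_def prod.case zz_obj_iff using A F P pT L2W[OF A(2)] W_cmp[of "pbP b (R2 c)" a] by auto
  show "a \<in> Fib \<inter> W \<Longrightarrow> c \<in> Cof \<inter> W \<Longrightarrow> fst (G1o (a, b, c)) \<in> Fib \<inter> W \<and> snd (snd (G1o (a, b, c))) \<in> Cof \<inter> W"
    unfolding G1o_def using A F P pT L2W[OF A(2)] W_cmp[of "pbP b (R2 c)" a] Fib_cmp[of "pbP b (R2 c)" a] by auto
qed

lemma e1_arr: assumes z: "zz_obj C W X Y (a, b, c)"
  shows "zz_arr C W X Y (e1 (a, b, c))"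
proof -
  have A: "a \<in> W" "c \<in> W" "a \<in> Ar C" "b \<in> Ar C" "c \<in> Ar C" "Cod C a = X" "Dom C b = Dom C a"
     "Dom C c = Y" "Cod C b = Cod C c" using z by (auto simp: zz_obj_iff)
  note F = F2[OF A(5)]
  have cc: "Cod C b = Cod C (R2 c)" using A F by simp
  note P = pb[OF A(4) F(2) cc]
  have pT: "pbP b (R2 c) \<in> Fib \<inter> W" using pb_triv[OF A(4) _ cc] F by blast
  show ?thesis
    using G1o_obj(1)[OF z] z unfolding e1_def prod.case zz_arr_iff G1o_def
    using A F P pT by auto
qed


lemma G1a_facts:
  assumes m: "zz_arr C W X Y ((a,b,c),(a',b',c'),u,v)"
  defines "p \<equiv> pbP b (R2 c)" and "q \<equiv> pbQ b (R2 c)" and "p' \<equiv> pbP b' (R2 c')" and "q' \<equiv> pbQ b' (R2 c')"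
    and "v1 \<equiv> M2 c c' (Idt C (Dom C c)) v" and "u1 \<equiv> pbH b' (R2 c') (u \<cdot> pbP b (R2 c)) (M2 c c' (Idt C (Dom C c)) v \<cdot> pbQ b (R2 c))"
  shows "v1 \<in> Ar C \<and> Dom C v1 = Cod C (L2 c) \<and> Cod C v1 = Cod C (L2 c') \<and> v1 \<cdot> L2 c = L2 c' \<and>
         R2 c' \<cdot> v1 = v \<cdot> R2 c \<and> v1 \<in> W"
    and "u1 \<in> Ar C \<and> Dom C u1 = Dom C p \<and> Cod C u1 = Dom C p' \<and> p' \<cdot> u1 = u \<cdot> p \<and> q' \<cdot> u1 = v1 \<cdot> q \<and> u1 \<in> W"
    and "zz_arr C W X Y (G1a ((a,b,c),(a',b',c'),u,v))"
proof -
  have u1_eq: "u1 = pbH b' (R2 c') (u \<cdot> p) (v1 \<cdot> q)" by (simp add: u1_def p_def q_def v1_def)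
  have z: "zz_obj C W X Y (a, b, c)" and z': "zz_obj C W X Y (a', b', c')"
    using m by (auto simp: zz_arr_iff)
  have A: "a \<in> W" "c \<in> W" "a \<in> Ar C" "b \<in> Ar C" "c \<in> Ar C" "Cod C a = X" "Dom C b = Dom C a"
     "Dom C c = Y" "Cod C b = Cod C c" using z by (auto simp: zz_obj_iff)
  have A': "a' \<in> W" "c' \<in> W" "a' \<in> Ar C" "b' \<in> Ar C" "c' \<in> Ar C" "Cod C a' = X" "Dom C b' = Dom C a'"
     "Dom C c' = Y" "Cod C b' = Cod C c'" using z' by (auto simp: zz_obj_iff)
  have U: "u \<in> W" "v \<in> W" "u \<in> Ar C" "Dom C u = Dom C a" "Cod C u = Dom C a'"
     "v \<in> Ar C" "Dom C v = Cod C b" "Cod C v = Cod C b'"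
     "a' \<cdot> u = a" "b' \<cdot> u = v \<cdot> b" "v \<cdot> c = c'" using m by (auto simp: zz_arr_iff)
  note F = F2[OF A(5)] and F' = F2[OF A'(5)]
  have cc: "Cod C b = Cod C (R2 c)" using A F by simp
  have cc': "Cod C b' = Cod C (R2 c')" using A' F' by simp
  note P = pb[OF A(4) F(2) cc, folded p_def q_def]
  note P' = pb[OF A'(4) F'(2) cc', folded p'_def q'_def]
  have pT: "p \<in> Fib \<inter> W" unfolding p_def using pb_triv[OF A(4) _ cc] F by blast
  have pT': "p' \<in> Fib \<inter> W" unfolding p'_def using pb_triv[OF A'(4) _ cc'] F' by blast
  have yob: "Y \<in> Ob C" using ar_ob A by auto
  have sq: "comm_square C c c' (Idt C (Dom C c)) v"
    unfolding comm_square_def hom_def using A A' U yob by auto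
  note MM = M2[OF sq, folded v1_def]
  have v1W: "v1 \<in> W"
    apply (rule W_cancel_r[of v1 "R2 c'"])
    using MM F F' U A A' W_cmp[of "R2 c" v] by auto
  show V1: "v1 \<in> Ar C \<and> Dom C v1 = Cod C (L2 c) \<and> Cod C v1 = Cod C (L2 c') \<and> v1 \<cdot> L2 c = L2 c' \<and>
         R2 c' \<cdot> v1 = v \<cdot> R2 c \<and> v1 \<in> W"
    using MM v1W F' A A' U by auto
  have e: "b' \<cdot> (u \<cdot> p) = R2 c' \<cdot> (v1 \<cdot> q)"
  proof -
    have "b' \<cdot> (u \<cdot> p) = (b' \<cdot> u) \<cdot> p" using assoc[of p u b'] P U A A' by auto
    also have "\<dots> = (v \<cdot> b) \<cdot> p" using U by simp
    also have "\<dots> = v \<cdot> (b \<cdot> p)" using assoc[of p b v] P U A by auto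
    also have "\<dots> = v \<cdot> (R2 c \<cdot> q)" using P by simp
    also have "\<dots> = (v \<cdot> R2 c) \<cdot> q" using assoc[of q "R2 c" v] P U A F by auto
    also have "\<dots> = (R2 c' \<cdot> v1) \<cdot> q" using V1 by simp
    also have "\<dots> = R2 c' \<cdot> (v1 \<cdot> q)" using assoc[of q v1 "R2 c'"] P V1 F F' by auto
    finally show ?thesis .
  qed
  note HH = pbH[OF A'(4) F'(2) cc', of "u \<cdot> p" "v1 \<cdot> q", folded p'_def q'_def u1_eq]
  have hy: "u \<cdot> p \<in> Ar C" "v1 \<cdot> q \<in> Ar C" "Dom C (u \<cdot> p) = Dom C (v1 \<cdot> q)" "Cod C (u \<cdot> p) = Dom C b'"
    "Cod C (v1 \<cdot> q) = Dom C (R2 c')" using P V1 U A A' F F' by auto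
  note H1 = HH(1-5)[OF hy e]
  have u1W: "u1 \<in> W"
    apply (rule W_cancel_r[of u1 p'])
    using H1 P P' pT pT' U A A' W_cmp[of p u] by auto
  show U1: "u1 \<in> Ar C \<and> Dom C u1 = Dom C p \<and> Cod C u1 = Dom C p' \<and> p' \<cdot> u1 = u \<cdot> p \<and> q' \<cdot> u1 = v1 \<cdot> q \<and> u1 \<in> W"
    using H1 u1W P U A by auto
  have e2: "(a' \<cdot> p') \<cdot> u1 = a \<cdot> p"
  proof -
    have "(a' \<cdot> p') \<cdot> u1 = a' \<cdot> (p' \<cdot> u1)" using assoc[of u1 p' a'] U1 P' A' by auto
    also have "\<dots> = a' \<cdot> (u \<cdot> p)" using U1 by simp
    also have "\<dots> = (a' \<cdot> u) \<cdot> p" using assoc[of p u a'] P U A A' by auto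
    finally show ?thesis using U by simp
  qed
  show "zz_arr C W X Y (G1a ((a,b,c),(a',b',c'),u,v))"
    using G1o_obj(1)[OF z] G1o_obj(1)[OF z'] unfolding G1a_def prod.case G1o_def
    unfolding zz_arr_iff
    apply (fold u1_def)
    apply (fold p_def q_def p'_def q'_def v1_def)
    using U1 V1 e2 P P' A A' F F' by auto
qed


lemma H_comp: assumes m1: "zz_arr C W X Y ((a,b,c),(a',b',c'),u,v)" and m2: "zz_arr C W X Y ((a',b',c'),(a'',b'',c''),u',v')"
  shows "zz_arr C W X Y ((a,b,c),(a'',b'',c''),u' \<cdot> u,v' \<cdot> v)"
proof -
  have z: "zz_obj C W X Y (a, b, c)" and z': "zz_obj C W X Y (a', b', c')" and z'': "zz_obj C W X Y (a'', b'', c'')"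
    using m1 m2 by (auto simp: zz_arr_iff)
  have A: "a \<in> Ar C" "b \<in> Ar C" "c \<in> Ar C" using z by (auto simp: zz_obj_iff)
  have A': "a' \<in> Ar C" "b' \<in> Ar C" "c' \<in> Ar C" using z' by (auto simp: zz_obj_iff)
  have A'': "a'' \<in> Ar C" "b'' \<in> Ar C" "c'' \<in> Ar C" "Dom C b'' = Dom C a''" using z'' by (auto simp: zz_obj_iff)
  have U: "u \<in> W" "v \<in> W" "u \<in> Ar C" "Dom C u = Dom C a" "Cod C u = Dom C a'"
     "v \<in> Ar C" "Dom C v = Cod C b" "Cod C v = Cod C b'"
     "a' \<cdot> u = a" "b' \<cdot> u = v \<cdot> b" "v \<cdot> c = c'" using m1 by (auto simp: zz_arr_iff)
  have U': "u' \<in> W" "v' \<in> W" "u' \<in> Ar C" "Dom C u' = Dom C a'" "Cod C u' = Dom C a''"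
     "v' \<in> Ar C" "Dom C v' = Cod C b'" "Cod C v' = Cod C b''"
     "a'' \<cdot> u' = a'" "b'' \<cdot> u' = v' \<cdot> b'" "v' \<cdot> c' = c''" using m2 by (auto simp: zz_arr_iff)
  have e1: "a'' \<cdot> (u' \<cdot> u) = a" using assoc[of u u' a''] U U' A'' by auto
  have A'x: "Dom C b' = Dom C a'" "Cod C b' = Cod C c'" using z' by (auto simp: zz_obj_iff)
  have Ax: "Dom C b = Dom C a" "Cod C b = Cod C c" using z by (auto simp: zz_obj_iff)
  have "b'' \<cdot> (u' \<cdot> u) = (b'' \<cdot> u') \<cdot> u" using assoc[of u u' b''] U U' A'' by auto
  also have "\<dots> = (v' \<cdot> b') \<cdot> u" using U' by simp
  also have "\<dots> = v' \<cdot> (b' \<cdot> u)" using assoc[of u b' v'] U U' A' A'x by simp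
  also have "\<dots> = v' \<cdot> (v \<cdot> b)" using U by simp
  also have "\<dots> = (v' \<cdot> v) \<cdot> b" using assoc[of b v v'] U U' A Ax A'x by simp
  finally have e2: "b'' \<cdot> (u' \<cdot> u) = (v' \<cdot> v) \<cdot> b" .
  have e3: "(v' \<cdot> v) \<cdot> c = c''" using assoc[of c v v'] U U' A z' z by (auto simp: zz_obj_iff)
  show ?thesis unfolding zz_arr_iff using z z'' e1 e2 e3 U U' W_cmp by auto
qed

lemma G1a_id: assumes z: "zz_obj C W X Y (a, b, c)"
  shows "G1a (Idt H (a, b, c)) = Idt H (G1o (a, b, c))"
proof -
  have A: "a \<in> W" "c \<in> W" "a \<in> Ar C" "b \<in> Ar C" "c \<in> Ar C" "Cod C a = X" "Dom C b = Dom C a"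
     "Dom C c = Y" "Cod C b = Cod C c" using z by (auto simp: zz_obj_iff)
  note F = F2[OF A(5)]
  have cc: "Cod C b = Cod C (R2 c)" using A F by simp
  note P = pb[OF A(4) F(2) cc]
  have M: "M2 c c (Idt C (Dom C c)) (Idt C (Cod C b)) = Idt C (Cod C (L2 c))"
    using M2_id[OF A(5)] A by simp
  have H6: "Idt C (Dom C (pbP b (R2 c))) = pbH b (R2 c) (pbP b (R2 c)) (pbQ b (R2 c))"
    apply (rule pbH(6)[OF A(4) F(2) cc])
    using P F ar_ob by auto
  show ?thesis
    unfolding G1a_def H_simps G1o_def prod.case fst_conv snd_conv M
    using H6 P F A by auto
qed

lemma G1a_comp: assumes m1: "zz_arr C W X Y ((a,b,c),(a',b',c'),u,v)" and m2: "zz_arr C W X Y ((a',b',c'),(a'',b'',c''),u',v')"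
  shows "G1a ((a,b,c),(a'',b'',c''),u' \<cdot> u,v' \<cdot> v) = Cmp H (G1a ((a',b',c'),(a'',b'',c''),u',v')) (G1a ((a,b,c),(a',b',c'),u,v))"
proof -
  have z: "zz_obj C W X Y (a, b, c)" and z': "zz_obj C W X Y (a', b', c')" and z'': "zz_obj C W X Y (a'', b'', c'')"
    using m1 m2 by (auto simp: zz_arr_iff)
  have A: "a \<in> Ar C" "b \<in> Ar C" "c \<in> Ar C" "Dom C c = Y" "Dom C b = Dom C a" "Cod C b = Cod C c" using z by (auto simp: zz_obj_iff)
  have A': "a' \<in> Ar C" "b' \<in> Ar C" "c' \<in> Ar C" "Dom C c' = Y" using z' by (auto simp: zz_obj_iff)
  have A'': "a'' \<in> Ar C" "b'' \<in> Ar C" "c'' \<in> Ar C" "Dom C b'' = Dom C a''" "Cod C b'' = Cod C c''" using z'' by (auto simp: zz_obj_iff)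
  have U: "u \<in> Ar C" "Dom C u = Dom C a" "Cod C u = Dom C a'"
     "v \<in> Ar C" "Dom C v = Cod C b" "Cod C v = Cod C b'"
     "v \<cdot> c = c'" using m1 by (auto simp: zz_arr_iff)
  have U': "u' \<in> Ar C" "Dom C u' = Dom C a'" "Cod C u' = Dom C a''"
     "v' \<in> Ar C" "Dom C v' = Cod C b'" "Cod C v' = Cod C b''"
     "v' \<cdot> c' = c''" using m2 by (auto simp: zz_arr_iff)
  note m3 = H_comp[OF m1 m2]
  note X1 = G1a_facts[OF m1] and X2 = G1a_facts[OF m2] and X3 = G1a_facts[OF m3]
  have yob: "Y \<in> Ob C" using ar_ob A by auto
  have sq1: "comm_square C c c' (Idt C (Dom C c)) v"
    using m1 unfolding comm_square_def hom_def zz_arr_iff zz_obj_iff using yob by auto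
  have sq2: "comm_square C c' c'' (Idt C (Dom C c')) v'"
    using m2 unfolding comm_square_def hom_def zz_arr_iff zz_obj_iff using yob by auto
  have ii: "Idt C (Dom C c') \<cdot> Idt C (Dom C c) = Idt C (Dom C c)" using A A' yob by simp
  have MC: "M2 c c'' (Idt C (Dom C c)) (v' \<cdot> v) = M2 c' c'' (Idt C (Dom C c')) v' \<cdot> M2 c c' (Idt C (Dom C c)) v"
    using M2_comp[OF sq1 sq2] ii by simp
  note F = F2[OF A(3)] and F'' = F2[OF A''(3)]
  have cc: "Cod C b = Cod C (R2 c)" using A F by simp
  have cc'': "Cod C b'' = Cod C (R2 c'')" using A'' F'' by simp
  note P = pb[OF A(2) F(2) cc]
  let ?p = "pbP b (R2 c)" and ?q = "pbQ b (R2 c)"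
  let ?p' = "pbP b' (R2 c')" and ?q' = "pbQ b' (R2 c')"
  let ?p'' = "pbP b'' (R2 c'')" and ?q'' = "pbQ b'' (R2 c'')"
  let ?v1 = "M2 c c' (Idt C (Dom C c)) v" and ?v1' = "M2 c' c'' (Idt C (Dom C c')) v'"
  let ?u1 = "pbH b' (R2 c') (u \<cdot> ?p) (?v1 \<cdot> ?q)" and ?u1' = "pbH b'' (R2 c'') (u' \<cdot> ?p') (?v1' \<cdot> ?q')"
  have X1a: "?u1 \<in> Ar C" "Dom C ?u1 = Dom C ?p" "Cod C ?u1 = Dom C ?p'" "?p' \<cdot> ?u1 = u \<cdot> ?p" "?q' \<cdot> ?u1 = ?v1 \<cdot> ?q"
    using X1(2) by auto
  have X1b: "?v1 \<in> Ar C" "Dom C ?v1 = Cod C (L2 c)" "Cod C ?v1 = Cod C (L2 c')" using X1(1) by auto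
  have X2a: "?u1' \<in> Ar C" "Dom C ?u1' = Dom C ?p'" "Cod C ?u1' = Dom C ?p''" "?p'' \<cdot> ?u1' = u' \<cdot> ?p'" "?q'' \<cdot> ?u1' = ?v1' \<cdot> ?q'"
    using X2(2) by auto
  have X2b: "?v1' \<in> Ar C" "Dom C ?v1' = Cod C (L2 c')" "Cod C ?v1' = Cod C (L2 c'')" using X2(1) by auto
  note P' = pb[OF A'(2) F2(2)[OF A'(3)]] and P'' = pb[OF A''(2) F''(2) cc'']
  have cc': "Cod C b' = Cod C (R2 c')" using z' F2[OF A'(3)] by (auto simp: zz_obj_iff)
  note P' = P'[OF cc']
  have A'y: "Dom C b' = Dom C a'" "Cod C b' = Cod C c'" "Dom C b = Dom C a" using z' z by (auto simp: zz_obj_iff)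
  have k1: "?p'' \<cdot> (?u1' \<cdot> ?u1) = (u' \<cdot> u) \<cdot> ?p"
  proof -
    have "?p'' \<cdot> (?u1' \<cdot> ?u1) = (?p'' \<cdot> ?u1') \<cdot> ?u1" using assoc[of ?u1 ?u1' ?p''] X1a X2a P'' by auto
    also have "\<dots> = u' \<cdot> (?p' \<cdot> ?u1)" using assoc[of ?u1 ?p' u'] X2a X1a U' P' A'y by simp
    also have "\<dots> = (u' \<cdot> u) \<cdot> ?p" using assoc[of ?p u u'] X1a U U' P A A'y by simp
    finally show ?thesis .
  qed
  have k2: "?q'' \<cdot> (?u1' \<cdot> ?u1) = (?v1' \<cdot> ?v1) \<cdot> ?q"
  proof -
    have "?q'' \<cdot> (?u1' \<cdot> ?u1) = (?q'' \<cdot> ?u1') \<cdot> ?u1" using assoc[of ?u1 ?u1' ?q''] X1a X2a P'' by auto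
    also have "\<dots> = ?v1' \<cdot> (?q' \<cdot> ?u1)" using assoc[of ?u1 ?q' ?v1'] X2a X1a X2b P' F2[OF A'(3)] by auto
    also have "\<dots> = (?v1' \<cdot> ?v1) \<cdot> ?q" using assoc[of ?q ?v1 ?v1'] X1a X1b X2b P F by auto
    finally show ?thesis .
  qed
  have hy: "(u' \<cdot> u) \<cdot> ?p \<in> Ar C" "(?v1' \<cdot> ?v1) \<cdot> ?q \<in> Ar C" "Dom C ((u' \<cdot> u) \<cdot> ?p) = Dom C ((?v1' \<cdot> ?v1) \<cdot> ?q)"
    "Cod C ((u' \<cdot> u) \<cdot> ?p) = Dom C b''" "Cod C ((?v1' \<cdot> ?v1) \<cdot> ?q) = Dom C (R2 c'')"
    using U U' P A A'' X1b X2b F F'' by auto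
  have e: "b'' \<cdot> ((u' \<cdot> u) \<cdot> ?p) = R2 c'' \<cdot> ((?v1' \<cdot> ?v1) \<cdot> ?q)"
    using k1 k2 P'' X1a X2a assoc[of "?u1' \<cdot> ?u1" ?p'' b''] assoc[of "?u1' \<cdot> ?u1" ?q'' "R2 c''"] F'' A'' by auto
  have U3: "?u1' \<cdot> ?u1 = pbH b'' (R2 c'') ((u' \<cdot> u) \<cdot> ?p) ((?v1' \<cdot> ?v1) \<cdot> ?q)"
    apply (rule pbH(6)[OF A''(2) F''(2) cc'' hy e])
    using X1a X2a k1 k2 U U' A P by auto
  show ?thesis
    unfolding G1a_def H_simps prod.case fst_conv snd_conv MC
    using U3 by simp
qed

lemma G1_functor: "is_functor H H (G1o, G1a)"
  unfolding is_functor_def fst_conv snd_conv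
proof (intro conjI ballI allI impI)
  fix x assume "x \<in> Ob H"
  then obtain a b c where x: "x = (a,b,c)" and z: "zz_obj C W X Y (a,b,c)" by (cases x) auto
  show "G1o x \<in> Ob H" using G1o_obj(1)[OF z] x by simp
  show "G1a (Idt H x) = Idt H (G1o x)" using G1a_id[OF z] x by simp
next
  fix f assume "f \<in> Ar H"
  then obtain a b c a' b' c' u v where x: "f = ((a,b,c),(a',b',c'),u,v)" and z: "zz_arr C W X Y ((a,b,c),(a',b',c'),u,v)"
    by (cases f) auto
  show "G1a f \<in> hom H (G1o (Dom H f)) (G1o (Cod H f))"
    unfolding hom_H using G1a_facts(3)[OF z] x by (simp add: G1a_def)
next
  fix f g assume "f \<in> Ar H" "g \<in> Ar H" "Cod H f = Dom H g"
  then obtain a b c a' b' c' u v a'' b'' c'' u' v' where x: "f = ((a,b,c),(a',b',c'),u,v)" and z: "zz_arr C W X Y ((a,b,c),(a',b',c'),u,v)"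
    and y: "g = ((a',b',c'),(a'',b'',c''),u',v')" and z2: "zz_arr C W X Y ((a',b',c'),(a'',b'',c''),u',v')"
    by (cases f; cases g) auto
  show "G1a (Cmp H g f) = Cmp H (G1a g) (G1a f)"
    using G1a_comp[OF z z2] x y by simp
qed

lemma e1_nat: "nat_trans H H (G1o, G1a) id_functor e1"
  unfolding nat_trans_def
proof (intro conjI ballI)
  show "is_functor H H (G1o, G1a)" by (rule G1_functor)
  show "is_functor H H id_functor" by (rule id_is)
next
  fix x assume "x \<in> Ob H"
  then obtain a b c where x: "x = (a,b,c)" and z: "zz_obj C W X Y (a,b,c)" by (cases x) auto
  show "e1 x \<in> hom H (fst (G1o, G1a) x) (fst id_functor x)"
    unfolding hom_H using e1_arr[OF z] x by (simp add: e1_def id_functor_def)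
next
  fix f assume "f \<in> Ar H"
  then obtain a b c a' b' c' u v where x: "f = ((a,b,c),(a',b',c'),u,v)" and z: "zz_arr C W X Y ((a,b,c),(a',b',c'),u,v)"
    by (cases f) auto
  note X = G1a_facts[OF z]
  show "Cmp H (snd id_functor f) (e1 (Dom H f)) = Cmp H (e1 (Cod H f)) (snd (G1o, G1a) f)"
    using X x by (simp add: e1_def id_functor_def G1a_def)
qed


definition "G2o z = (case z of (a, b, c) \<Rightarrow> (R2 a, poP (L2 a) b, poQ (L2 a) b \<cdot> c))"
definition "G2a m = (case m of ((a, b, c), (a', b', c'), u, v) \<Rightarrow>
   (G2o (a, b, c), G2o (a', b', c'), M2 a a' u (Idt C (Cod C a)),
    poH (L2 a) b (poP (L2 a') b' \<cdot> M2 a a' u (Idt C (Cod C a))) (poQ (L2 a') b' \<cdot> v)))"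
definition "e2 z = (case z of (a, b, c) \<Rightarrow> ((a, b, c), G2o (a, b, c), L2 a, poQ (L2 a) b))"

lemma G2o_obj: assumes z: "zz_obj C W X Y (a, b, c)"
  shows "zz_obj C W X Y (G2o (a, b, c))"
    "c \<in> Cof \<Longrightarrow> fst (G2o (a, b, c)) \<in> Fib \<inter> W \<and> snd (snd (G2o (a, b, c))) \<in> Cof \<inter> W"
proof -
  have A: "a \<in> W" "c \<in> W" "a \<in> Ar C" "b \<in> Ar C" "c \<in> Ar C" "Cod C a = X" "Dom C b = Dom C a"
     "Dom C c = Y" "Cod C b = Cod C c" using z by (auto simp: zz_obj_iff)
  note F = F2[OF A(3)]
  have cc: "Dom C (L2 a) = Dom C b" using A F by simp
  note P = po[OF F(1) A(4) cc]
  have qT: "poQ (L2 a) b \<in> Cof \<inter> W" using po_triv[OF _ A(4) cc] F L2W[OF A(1)] by blast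
  show "zz_obj C W X Y (G2o (a, b, c))"
    unfolding G2o_def prod.case zz_obj_iff using A F P qT W_cmp[of c "poQ (L2 a) b"] by auto
  show "c \<in> Cof \<Longrightarrow> fst (G2o (a, b, c)) \<in> Fib \<inter> W \<and> snd (snd (G2o (a, b, c))) \<in> Cof \<inter> W"
    unfolding G2o_def using A F P qT W_cmp[of c "poQ (L2 a) b"] Cof_cmp[of c "poQ (L2 a) b"] by auto
qed

lemma e2_arr: assumes z: "zz_obj C W X Y (a, b, c)"
  shows "zz_arr C W X Y (e2 (a, b, c))"
proof -
  have A: "a \<in> W" "c \<in> W" "a \<in> Ar C" "b \<in> Ar C" "c \<in> Ar C" "Cod C a = X" "Dom C b = Dom C a"
     "Dom C c = Y" "Cod C b = Cod C c" using z by (auto simp: zz_obj_iff)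
  note F = F2[OF A(3)]
  have cc: "Dom C (L2 a) = Dom C b" using A F by simp
  note P = po[OF F(1) A(4) cc]
  have qT: "poQ (L2 a) b \<in> Cof \<inter> W" using po_triv[OF _ A(4) cc] F L2W[OF A(1)] by blast
  show ?thesis
    using G2o_obj(1)[OF z] z unfolding e2_def prod.case zz_arr_iff G2o_def
    using A F P qT L2W[OF A(1)] by auto
qed

lemma G2a_facts:
  assumes m: "zz_arr C W X Y ((a,b,c),(a',b',c'),u,v)"
  defines "P \<equiv> poP (L2 a) b" and "Q \<equiv> poQ (L2 a) b" and "P' \<equiv> poP (L2 a') b'" and "Q' \<equiv> poQ (L2 a') b'"
    and "u2 \<equiv> M2 a a' u (Idt C (Cod C a))"
    and "v2 \<equiv> poH (L2 a) b (poP (L2 a') b' \<cdot> M2 a a' u (Idt C (Cod C a))) (poQ (L2 a') b' \<cdot> v)"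
  shows "u2 \<in> Ar C \<and> Dom C u2 = Cod C (L2 a) \<and> Cod C u2 = Cod C (L2 a') \<and> u2 \<cdot> L2 a = L2 a' \<cdot> u \<and>
         R2 a' \<cdot> u2 = R2 a \<and> u2 \<in> W"
    and "v2 \<in> Ar C \<and> Dom C v2 = Cod C P \<and> Cod C v2 = Cod C P' \<and> v2 \<cdot> P = P' \<cdot> u2 \<and> v2 \<cdot> Q = Q' \<cdot> v \<and> v2 \<in> W"
    and "zz_arr C W X Y (G2a ((a,b,c),(a',b',c'),u,v))"
proof -
  have v2_eq: "v2 = poH (L2 a) b (P' \<cdot> u2) (Q' \<cdot> v)" by (simp add: v2_def P'_def Q'_def u2_def)
  have z: "zz_obj C W X Y (a, b, c)" and z': "zz_obj C W X Y (a', b', c')"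
    using m by (auto simp: zz_arr_iff)
  have A: "a \<in> W" "c \<in> W" "a \<in> Ar C" "b \<in> Ar C" "c \<in> Ar C" "Cod C a = X" "Dom C b = Dom C a"
     "Dom C c = Y" "Cod C b = Cod C c" using z by (auto simp: zz_obj_iff)
  have A': "a' \<in> W" "c' \<in> W" "a' \<in> Ar C" "b' \<in> Ar C" "c' \<in> Ar C" "Cod C a' = X" "Dom C b' = Dom C a'"
     "Dom C c' = Y" "Cod C b' = Cod C c'" using z' by (auto simp: zz_obj_iff)
  have U: "u \<in> W" "v \<in> W" "u \<in> Ar C" "Dom C u = Dom C a" "Cod C u = Dom C a'"
     "v \<in> Ar C" "Dom C v = Cod C b" "Cod C v = Cod C b'"
     "a' \<cdot> u = a" "b' \<cdot> u = v \<cdot> b" "v \<cdot> c = c'" using m by (auto simp: zz_arr_iff)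
  note F = F2[OF A(3)] and F' = F2[OF A'(3)]
  have cc: "Dom C (L2 a) = Dom C b" using A F by simp
  have cc': "Dom C (L2 a') = Dom C b'" using A' F' by simp
  note PP = po[OF F(1) A(4) cc, folded P_def Q_def]
  note PP' = po[OF F'(1) A'(4) cc', folded P'_def Q'_def]
  have qT: "Q \<in> Cof \<inter> W" unfolding Q_def using po_triv[OF _ A(4) cc] F L2W[OF A(1)] by blast
  have qT': "Q' \<in> Cof \<inter> W" unfolding Q'_def using po_triv[OF _ A'(4) cc'] F' L2W[OF A'(1)] by blast
  have xob: "X \<in> Ob C" using ar_ob A by auto
  have sq: "comm_square C a a' u (Idt C (Cod C a))"
    unfolding comm_square_def hom_def using A A' U xob by auto
  note MM = M2[OF sq, folded u2_def]
  have MM5: "R2 a' \<cdot> u2 = R2 a" using MM(5) F A by simp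
  have u2W: "u2 \<in> W"
    apply (rule W_cancel_r[of u2 "R2 a'"])
    using MM MM5 F F' U A A' by auto
  show U2: "u2 \<in> Ar C \<and> Dom C u2 = Cod C (L2 a) \<and> Cod C u2 = Cod C (L2 a') \<and> u2 \<cdot> L2 a = L2 a' \<cdot> u \<and>
         R2 a' \<cdot> u2 = R2 a \<and> u2 \<in> W"
    using MM MM5 u2W by auto
  have e: "(P' \<cdot> u2) \<cdot> L2 a = (Q' \<cdot> v) \<cdot> b"
  proof -
    have "(P' \<cdot> u2) \<cdot> L2 a = P' \<cdot> (u2 \<cdot> L2 a)" using assoc[of "L2 a" u2 P'] PP' U2 F by auto
    also have "\<dots> = P' \<cdot> (L2 a' \<cdot> u)" using U2 by simp
    also have "\<dots> = (P' \<cdot> L2 a') \<cdot> u" using assoc[of u "L2 a'" P'] PP' U F' A' by auto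
    also have "\<dots> = (Q' \<cdot> b') \<cdot> u" using PP' by simp
    also have "\<dots> = Q' \<cdot> (b' \<cdot> u)" using assoc[of u b' Q'] PP' U A' by auto
    also have "\<dots> = Q' \<cdot> (v \<cdot> b)" using U by simp
    also have "\<dots> = (Q' \<cdot> v) \<cdot> b" using assoc[of b v Q'] PP' U A by auto
    finally show ?thesis .
  qed
  note HH = poH[OF F(1) A(4) cc, of "P' \<cdot> u2" "Q' \<cdot> v", folded P_def Q_def v2_eq]
  have hy: "P' \<cdot> u2 \<in> Ar C" "Q' \<cdot> v \<in> Ar C" "Cod C (P' \<cdot> u2) = Cod C (Q' \<cdot> v)" "Dom C (P' \<cdot> u2) = Cod C (L2 a)"
    "Dom C (Q' \<cdot> v) = Cod C b" using PP' U2 U A A' F F' by auto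
  note H1 = HH(1-5)[OF hy e]
  have v2W: "v2 \<in> W"
    apply (rule W_cancel_l[of Q v2])
    using H1 PP PP' qT qT' U A A' W_cmp[of v Q'] by auto
  show V2: "v2 \<in> Ar C \<and> Dom C v2 = Cod C P \<and> Cod C v2 = Cod C P' \<and> v2 \<cdot> P = P' \<cdot> u2 \<and> v2 \<cdot> Q = Q' \<cdot> v \<and> v2 \<in> W"
    using H1 v2W PP' U2 by auto
  have e2: "v2 \<cdot> (Q \<cdot> c) = Q' \<cdot> c'"
  proof -
    have "v2 \<cdot> (Q \<cdot> c) = (v2 \<cdot> Q) \<cdot> c" using assoc[of c Q v2] V2 PP A by auto
    also have "\<dots> = (Q' \<cdot> v) \<cdot> c" using V2 by simp
    also have "\<dots> = Q' \<cdot> (v \<cdot> c)" using assoc[of c v Q'] PP' U A by auto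
    finally show ?thesis using U by simp
  qed
  show "zz_arr C W X Y (G2a ((a,b,c),(a',b',c'),u,v))"
    using G2o_obj(1)[OF z] G2o_obj(1)[OF z'] unfolding G2a_def prod.case G2o_def
    unfolding zz_arr_iff
    apply (fold v2_def)
    apply (fold P_def Q_def P'_def Q'_def u2_def)
    using U2 V2 e2 PP PP' A A' F F' by auto
qed


lemma G2a_id: assumes z: "zz_obj C W X Y (a, b, c)"
  shows "G2a (Idt H (a, b, c)) = Idt H (G2o (a, b, c))"
proof -
  have A: "a \<in> W" "c \<in> W" "a \<in> Ar C" "b \<in> Ar C" "c \<in> Ar C" "Cod C a = X" "Dom C b = Dom C a"
     "Dom C c = Y" "Cod C b = Cod C c" using z by (auto simp: zz_obj_iff)
  note F = F2[OF A(3)]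
  have cc: "Dom C (L2 a) = Dom C b" using A F by simp
  note P = po[OF F(1) A(4) cc]
  have M: "M2 a a (Idt C (Dom C a)) (Idt C (Cod C a)) = Idt C (Cod C (L2 a))"
    using M2_id[OF A(3)] A by simp
  have H6: "Idt C (Cod C (poP (L2 a) b)) = poH (L2 a) b (poP (L2 a) b) (poQ (L2 a) b)"
    apply (rule poH(6)[OF F(1) A(4) cc])
    using P F ar_ob by auto
  show ?thesis
    unfolding G2a_def H_simps G2o_def prod.case fst_conv snd_conv M
    using H6 P F A by auto
qed

lemma G2a_comp: assumes m1: "zz_arr C W X Y ((a,b,c),(a',b',c'),u,v)" and m2: "zz_arr C W X Y ((a',b',c'),(a'',b'',c''),u',v')"
  shows "G2a ((a,b,c),(a'',b'',c''),u' \<cdot> u,v' \<cdot> v) = Cmp H (G2a ((a',b',c'),(a'',b'',c''),u',v')) (G2a ((a,b,c),(a',b',c'),u,v))"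
proof -
  have z: "zz_obj C W X Y (a, b, c)" and z': "zz_obj C W X Y (a', b', c')" and z'': "zz_obj C W X Y (a'', b'', c'')"
    using m1 m2 by (auto simp: zz_arr_iff)
  have A: "a \<in> Ar C" "b \<in> Ar C" "c \<in> Ar C" "Cod C a = X" "Dom C b = Dom C a" "Cod C b = Cod C c" using z by (auto simp: zz_obj_iff)
  have A': "a' \<in> Ar C" "b' \<in> Ar C" "c' \<in> Ar C" "Cod C a' = X" "Dom C b' = Dom C a'" "Cod C b' = Cod C c'" using z' by (auto simp: zz_obj_iff)
  have A'': "a'' \<in> Ar C" "b'' \<in> Ar C" "c'' \<in> Ar C" "Dom C b'' = Dom C a''" "Cod C b'' = Cod C c''" using z'' by (auto simp: zz_obj_iff)
  have U: "u \<in> Ar C" "Dom C u = Dom C a" "Cod C u = Dom C a'"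
     "v \<in> Ar C" "Dom C v = Cod C b" "Cod C v = Cod C b'" using m1 by (auto simp: zz_arr_iff)
  have U': "u' \<in> Ar C" "Dom C u' = Dom C a'" "Cod C u' = Dom C a''"
     "v' \<in> Ar C" "Dom C v' = Cod C b'" "Cod C v' = Cod C b''" using m2 by (auto simp: zz_arr_iff)
  note m3 = H_comp[OF m1 m2]
  note X1 = G2a_facts[OF m1] and X2 = G2a_facts[OF m2]
  have xob: "X \<in> Ob C" using ar_ob A by auto
  have sq1: "comm_square C a a' u (Idt C (Cod C a))"
    using m1 unfolding comm_square_def hom_def zz_arr_iff zz_obj_iff using xob by auto
  have sq2: "comm_square C a' a'' u' (Idt C (Cod C a'))"
    using m2 unfolding comm_square_def hom_def zz_arr_iff zz_obj_iff using xob by auto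
  have ii: "Idt C (Cod C a') \<cdot> Idt C (Cod C a) = Idt C (Cod C a)" using A A' xob by simp
  have MC: "M2 a a'' (u' \<cdot> u) (Idt C (Cod C a)) = M2 a' a'' u' (Idt C (Cod C a')) \<cdot> M2 a a' u (Idt C (Cod C a))"
    using M2_comp[OF sq1 sq2] ii by simp
  note F = F2[OF A(1)] and F' = F2[OF A'(1)] and F'' = F2[OF A''(1)]
  have cc: "Dom C (L2 a) = Dom C b" using A F by simp
  have cc': "Dom C (L2 a') = Dom C b'" using A' F' by simp
  have cc'': "Dom C (L2 a'') = Dom C b''" using A'' F'' by simp
  note P = po[OF F(1) A(2) cc] and P' = po[OF F'(1) A'(2) cc'] and P'' = po[OF F''(1) A''(2) cc'']
  let ?p = "poP (L2 a) b" and ?q = "poQ (L2 a) b"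
  let ?p' = "poP (L2 a') b'" and ?q' = "poQ (L2 a') b'"
  let ?p'' = "poP (L2 a'') b''" and ?q'' = "poQ (L2 a'') b''"
  let ?u2 = "M2 a a' u (Idt C (Cod C a))" and ?u2' = "M2 a' a'' u' (Idt C (Cod C a'))"
  let ?v2 = "poH (L2 a) b (?p' \<cdot> ?u2) (?q' \<cdot> v)" and ?v2' = "poH (L2 a') b' (?p'' \<cdot> ?u2') (?q'' \<cdot> v')"
  have X1a: "?v2 \<in> Ar C" "Dom C ?v2 = Cod C ?p" "Cod C ?v2 = Cod C ?p'" "?v2 \<cdot> ?p = ?p' \<cdot> ?u2" "?v2 \<cdot> ?q = ?q' \<cdot> v"
    using X1(2) by auto
  have X1b: "?u2 \<in> Ar C" "Dom C ?u2 = Cod C (L2 a)" "Cod C ?u2 = Cod C (L2 a')" using X1(1) by auto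
  have X2a: "?v2' \<in> Ar C" "Dom C ?v2' = Cod C ?p'" "Cod C ?v2' = Cod C ?p''" "?v2' \<cdot> ?p' = ?p'' \<cdot> ?u2'" "?v2' \<cdot> ?q' = ?q'' \<cdot> v'"
    using X2(2) by auto
  have X2b: "?u2' \<in> Ar C" "Dom C ?u2' = Cod C (L2 a')" "Cod C ?u2' = Cod C (L2 a'')" using X2(1) by auto
  have k1: "(?v2' \<cdot> ?v2) \<cdot> ?p = ?p'' \<cdot> (?u2' \<cdot> ?u2)"
  proof -
    have "(?v2' \<cdot> ?v2) \<cdot> ?p = ?v2' \<cdot> (?v2 \<cdot> ?p)" using assoc[of ?p ?v2 ?v2'] X1a X2a P by auto
    also have "\<dots> = (?v2' \<cdot> ?p') \<cdot> ?u2" using assoc[of ?u2 ?p' ?v2'] X2a X1a X1b P' by simp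
    also have "\<dots> = ?p'' \<cdot> (?u2' \<cdot> ?u2)" using assoc[of ?u2 ?u2' ?p''] X1b X2b X2a P'' by simp
    finally show ?thesis .
  qed
  have k2: "(?v2' \<cdot> ?v2) \<cdot> ?q = ?q'' \<cdot> (v' \<cdot> v)"
  proof -
    have "(?v2' \<cdot> ?v2) \<cdot> ?q = ?v2' \<cdot> (?v2 \<cdot> ?q)" using assoc[of ?q ?v2 ?v2'] X1a X2a P by auto
    also have "\<dots> = (?v2' \<cdot> ?q') \<cdot> v" using assoc[of v ?q' ?v2'] X2a X1a U P' by simp
    also have "\<dots> = ?q'' \<cdot> (v' \<cdot> v)" using assoc[of v v' ?q''] U U' X2a P'' by simp
    finally show ?thesis .
  qed
  have hy: "?p'' \<cdot> (?u2' \<cdot> ?u2) \<in> Ar C" "?q'' \<cdot> (v' \<cdot> v) \<in> Ar C"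
    "Cod C (?p'' \<cdot> (?u2' \<cdot> ?u2)) = Cod C (?q'' \<cdot> (v' \<cdot> v))"
    "Dom C (?p'' \<cdot> (?u2' \<cdot> ?u2)) = Cod C (L2 a)" "Dom C (?q'' \<cdot> (v' \<cdot> v)) = Cod C b"
    using U U' P'' X1b X2b F F'' by auto
  have e: "(?p'' \<cdot> (?u2' \<cdot> ?u2)) \<cdot> L2 a = (?q'' \<cdot> (v' \<cdot> v)) \<cdot> b"
  proof -
    have "(?p'' \<cdot> (?u2' \<cdot> ?u2)) \<cdot> L2 a = ((?v2' \<cdot> ?v2) \<cdot> ?p) \<cdot> L2 a" using k1 by simp
    also have "\<dots> = (?v2' \<cdot> ?v2) \<cdot> (?p \<cdot> L2 a)" using assoc[of "L2 a" ?p "?v2' \<cdot> ?v2"] X1a X2a P F by simp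
    also have "\<dots> = (?v2' \<cdot> ?v2) \<cdot> (?q \<cdot> b)" using P by simp
    also have "\<dots> = ((?v2' \<cdot> ?v2) \<cdot> ?q) \<cdot> b" using assoc[of b ?q "?v2' \<cdot> ?v2"] X1a X2a P A by simp
    finally show ?thesis using k2 by simp
  qed
  have V3: "?v2' \<cdot> ?v2 = poH (L2 a) b (?p'' \<cdot> (?u2' \<cdot> ?u2)) (?q'' \<cdot> (v' \<cdot> v))"
    apply (rule poH(6)[OF F(1) A(2) cc hy e])
    using X1a X2a X1b X2b k1 k2 P'' by auto
  show ?thesis
    unfolding G2a_def H_simps prod.case fst_conv snd_conv MC
    using V3 by simp
qed

lemma G2_functor: "is_functor H H (G2o, G2a)"
  unfolding is_functor_def fst_conv snd_conv
proof (intro conjI ballI allI impI)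
  fix x assume "x \<in> Ob H"
  then obtain a b c where x: "x = (a,b,c)" and z: "zz_obj C W X Y (a,b,c)" by (cases x) auto
  show "G2o x \<in> Ob H" using G2o_obj(1)[OF z] x by simp
  show "G2a (Idt H x) = Idt H (G2o x)" using G2a_id[OF z] x by simp
next
  fix f assume "f \<in> Ar H"
  then obtain a b c a' b' c' u v where x: "f = ((a,b,c),(a',b',c'),u,v)" and z: "zz_arr C W X Y ((a,b,c),(a',b',c'),u,v)"
    by (cases f) auto
  show "G2a f \<in> hom H (G2o (Dom H f)) (G2o (Cod H f))"
    unfolding hom_H using G2a_facts(3)[OF z] x by (simp add: G2a_def)
next
  fix f g assume "f \<in> Ar H" "g \<in> Ar H" "Cod H f = Dom H g"
  then obtain a b c a' b' c' u v a'' b'' c'' u' v' where x: "f = ((a,b,c),(a',b',c'),u,v)" and z: "zz_arr C W X Y ((a,b,c),(a',b',c'),u,v)"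
    and y: "g = ((a',b',c'),(a'',b'',c''),u',v')" and z2: "zz_arr C W X Y ((a',b',c'),(a'',b'',c''),u',v')"
    by (cases f; cases g) auto
  show "G2a (Cmp H g f) = Cmp H (G2a g) (G2a f)"
    using G2a_comp[OF z z2] x y by simp
qed

lemma e2_nat: "nat_trans H H id_functor (G2o, G2a) e2"
  unfolding nat_trans_def
proof (intro conjI ballI)
  show "is_functor H H (G2o, G2a)" by (rule G2_functor)
  show "is_functor H H id_functor" by (rule id_is)
next
  fix x assume "x \<in> Ob H"
  then obtain a b c where x: "x = (a,b,c)" and z: "zz_obj C W X Y (a,b,c)" by (cases x) auto
  show "e2 x \<in> hom H (fst id_functor x) (fst (G2o, G2a) x)"
    unfolding hom_H using e2_arr[OF z] x by (simp add: e2_def id_functor_def)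
next
  fix f assume "f \<in> Ar H"
  then obtain a b c a' b' c' u v where x: "f = ((a,b,c),(a',b',c'),u,v)" and z: "zz_arr C W X Y ((a,b,c),(a',b',c'),u,v)"
    by (cases f) auto
  note X = G2a_facts[OF z]
  show "Cmp H (snd (G2o, G2a) f) (e2 (Dom H f)) = Cmp H (e2 (Cod H f)) (snd id_functor f)"
    using X x by (simp add: e2_def id_functor_def G2a_def)
qed


lemma G1o_cof: "x \<in> Ob H \<Longrightarrow> snd (snd (G1o x)) \<in> Cof"
  by (cases x) (auto simp: G1o_def zz_obj_iff F2)

end

theorem proposition2p1:
  fixes C :: "('o, 'a) cat" and W Cof Fib :: "'a set" and X Y :: 'o
  assumes "model_category C W Cof Fib"
    and "X \<in> Ob C" and "Y \<in> Ob C"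
  shows "homotopy_equivalence (WCWFCat C W Cof Fib X Y) (HomCat C W X Y) id_functor"
proof -
  obtain L1 R1 M1 where 1: "functorial_factorization C L1 R1 M1" "\<forall>f\<in>Ar C. L1 f \<in> Cof \<inter> W \<and> R1 f \<in> Fib"
    using assms(1) unfolding model_category_def by blast
  obtain L2 R2 M2 where 2: "functorial_factorization C L2 R2 M2" "\<forall>f\<in>Ar C. L2 f \<in> Cof \<and> R2 f \<in> Fib \<inter> W"
    using assms(1) unfolding model_category_def by blast
  interpret mcH C W Cof Fib L1 R1 M1 L2 R2 M2 X Y
    by (unfold_locales; fact assms 1 2)
  define P :: "'a \<times> 'a \<times> 'a \<Rightarrow> bool" where "P = (\<lambda>(a, b, c). a \<in> Fib \<inter> W \<and> c \<in> Cof \<inter> W)"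
  have WC: "WCWFCat C W Cof Fib X Y = full_subcat H P" unfolding WCWFCat_def P_def by simp
  let ?G1 = "(G1o, G1a)" and ?G2 = "(G2o, G2a)"
  let ?G = "functor_comp ?G2 ?G1"
  have PG1: "\<forall>x\<in>Ob H. P x \<longrightarrow> P (fst ?G1 x)"
  proof (intro ballI impI)
    fix x assume "x \<in> Ob H" "P x"
    then obtain a b c where x: "x = (a,b,c)" "zz_obj C W X Y (a,b,c)" "a \<in> Fib \<inter> W" "c \<in> Cof \<inter> W"
      unfolding P_def by (cases x) auto
    show "P (fst ?G1 x)" using G1o_obj(2)[OF x(2-4)] x(1) unfolding P_def by (cases "G1o (a,b,c)") auto
  qed
  have PG: "\<forall>x\<in>Ob H. P (fst ?G x)"
  proof
    fix x assume x: "x \<in> Ob H"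
    have o: "G1o x \<in> Ob H" using G1o_obj(1) x by (cases x) auto
    then obtain a b c where y: "G1o x = (a,b,c)" "zz_obj C W X Y (a,b,c)" by (cases "G1o x") auto
    have "c \<in> Cof" using G1o_cof[OF x] y by simp
    then show "P (fst ?G x)" using G2o_obj(2)[OF y(2)] y(1) unfolding P_def functor_comp_def
      by (cases "G2o (a,b,c)") auto
  qed
  have GH: "is_functor H H ?G" using functor_comp_is[OF G1_functor G2_functor] .
  have nt2: "nat_trans H H ?G1 ?G (e2 \<circ> G1o)"
    using whisker[OF e2_nat G1_functor] by simp
  have z1: "nt_zigzag H H (functor_comp id_functor ?G) id_functor"
    using nt_zigzag.zz_fwd[OF nt_zigzag.zz_bwd[OF nt_zigzag.zz_refl[OF GH] nt2] e1_nat] by simp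
  have GW: "is_functor (full_subcat H P) (full_subcat H P) ?G"
    using fs_restrict[OF GH H_ob] PG by blast
  have nt2': "nat_trans (full_subcat H P) (full_subcat H P) ?G1 ?G (e2 \<circ> G1o)"
    using nat_fs[OF nt2 H_ob PG1] PG by blast
  have nt1': "nat_trans (full_subcat H P) (full_subcat H P) ?G1 id_functor e1"
    using nat_fs[OF e1_nat H_ob PG1] by (simp add: id_functor_def)
  have z2: "nt_zigzag (full_subcat H P) (full_subcat H P) (functor_comp ?G id_functor) id_functor"
    using nt_zigzag.zz_fwd[OF nt_zigzag.zz_bwd[OF nt_zigzag.zz_refl[OF GW] nt2'] nt1'] by simp
  have GI: "is_functor H (full_subcat H P) ?G" using fs_into[OF GH H_ob] PG by blast
  show ?thesis unfolding WC homotopy_equivalence_def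
    using fs_incl GI z1 z2 by blast
qed

end
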